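(* Let $T$ be a tree of order $n>10$ that is not isomorphic to the path $P_n$. Then for every integer $k$ with $2\le k\le n-2$, the graph $F_k(T)$ is non-planar.
   Context: For a simple graph $G=(V,E)$ on $n$ vertices and an integer $1\le k<n$, the $k$-token graph $F_k(G)$ is the graph whose vertices are all $k$-element subsets of $V$, two such subsets $A,B$ being adjacent whenever their symmetric difference $A\triangle B$ is a pair $\{a,b\}$ with $a$ adjacent to $b$ in $G$. *)

theory Defs
  imports "Graph_Theory.Kuratowski"
begin

definition simple_graph :: "'a set \<Rightarrow> ('a \<times> 'a) set \<Rightarrow> bool" where
  "simple_graph V E \<longleftrightarrow> finite V \<and> E \<subseteq> V \<times> V \<and> sym E \<and> (\<forall>x. (x, x) \<notin> E)"

definition connected_graph :: "'a set \<Rightarrow> ('a \<times> 'a) set \<Rightarrow> bool" where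
  "connected_graph V E \<longleftrightarrow> (\<forall>u\<in>V. \<forall>v\<in>V. (u, v) \<in> E\<^sup>*)"

definition has_cycle :: "'a set \<Rightarrow> ('a \<times> 'a) set \<Rightarrow> bool" where
  "has_cycle V E \<longleftrightarrow> (\<exists>xs. 3 \<le> length xs \<and> distinct xs \<and> set xs \<subseteq> V \<and>
      (\<forall>i < length xs. (xs ! i, xs ! ((i + 1) mod length xs)) \<in> E))"

definition is_tree :: "'a set \<Rightarrow> ('a \<times> 'a) set \<Rightarrow> bool" where
  "is_tree V E \<longleftrightarrow> simple_graph V E \<and> V \<noteq> {} \<and> connected_graph V E \<and> \<not> has_cycle V E"

definition iso_to_path :: "'a set \<Rightarrow> ('a \<times> 'a) set \<Rightarrow> bool" where
  "iso_to_path V E \<longleftrightarrow> (\<exists>f. bij_betw f V {0..<card V} \<and>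
      (\<forall>u\<in>V. \<forall>v\<in>V. (u, v) \<in> E \<longleftrightarrow> (f u = f v + 1 \<or> f v = f u + 1)))"

text \<open>The k-token graph, as a symmetric pair digraph.\<close>
definition token_graph :: "'a set \<Rightarrow> ('a \<times> 'a) set \<Rightarrow> nat \<Rightarrow> 'a set pair_pre_digraph" where
  "token_graph V E k = \<lparr> pverts = {A. A \<subseteq> V \<and> card A = k},
     parcs = {(A, B). A \<subseteq> V \<and> card A = k \<and> B \<subseteq> V \<and> card B = k \<and>
        (\<exists>a b. (A - B) \<union> (B - A) = {a, b} \<and> (a, b) \<in> E)} \<rparr>"

end

theory Submission
  imports Defs
begin

fun path_arcs :: "'a list \<Rightarrow> ('a \<times> 'a) set" where
  "path_arcs (x # y # zs) = {(x,y),(y,x)} \<union> path_arcs (y # zs)"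
| "path_arcs _ = {}"

lemma path_arcs_sub: "path_arcs (u # ws @ [v]) \<subseteq> {(u,v),(v,u)} \<union> {e. fst e \<in> set ws \<or> snd e \<in> set ws}"
proof (induction ws arbitrary: u)
  case Nil then show ?case by simp
next
  case (Cons a ws)
  have "path_arcs (u # (a # ws) @ [v]) = {(u,a),(a,u)} \<union> path_arcs (a # ws @ [v])" by simp
  then show ?case using Cons.IH[of a] by auto
qed

lemma subdiv_path:
  assumes "subdivision_pair G H" "(u,v) \<in> parcs H" "distinct ws" "set ws \<inter> pverts H = {}"
  shows "subdivision_pair G \<lparr>pverts = pverts H \<union> set ws,
           parcs = (parcs H - {(u,v),(v,u)}) \<union> path_arcs (u # ws @ [v])\<rparr>"
  using assms
proof (induction ws arbitrary: u H)
  case Nil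
  interpret H: pair_bidirected_digraph H using Nil(1) by (rule bidirected_digraphI_subdivision)
  have "(v,u) \<in> parcs H" using Nil(2) H.pair_sym_arcs by (auto simp: symmetric_def elim: symE)
  then have e: "(parcs H - {(u,v),(v,u)}) \<union> path_arcs (u # [] @ [v]) = parcs H" using Nil(2) by auto
  have r: "\<lparr>pverts = pverts H \<union> set [], parcs = (parcs H - {(u,v),(v,u)}) \<union> path_arcs (u # [] @ [v])\<rparr> = H"
    unfolding e by (cases H) simp
  show ?case unfolding r using Nil(1) .
next
  case (Cons w ws)
  interpret H: pair_bidirected_digraph H using Cons(2) by (rule bidirected_digraphI_subdivision)
  have wH: "w \<notin> pverts H" using Cons by auto
  have uH: "u \<in> pverts H" "v \<in> pverts H" using Cons(3) H.in_arcsD1 H.in_arcsD2 by auto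
  define H1 where "H1 = subdivide H (u,v) w"
  have s1: "subdivision_pair G H1" unfolding H1_def
    by (rule subdivision_pair_divide[OF Cons(3) wH Cons(2)])
  have e1: "(w,v) \<in> parcs H1" unfolding H1_def by simp
  have d1: "set ws \<inter> pverts H1 = {}" using Cons(4,5) unfolding H1_def by auto
  from Cons.IH[OF s1 e1 _ d1] Cons(4)
  have r: "subdivision_pair G \<lparr>pverts = pverts H1 \<union> set ws,
           parcs = (parcs H1 - {(w,v),(v,w)}) \<union> path_arcs (w # ws @ [v])\<rparr>" by simp
  have "pverts H1 \<union> set ws = pverts H \<union> set (w # ws)" unfolding H1_def by auto
  moreover have "(parcs H1 - {(w,v),(v,w)}) \<union> path_arcs (w # ws @ [v])
      = (parcs H - {(u,v),(v,u)}) \<union> path_arcs (u # (w # ws) @ [v])"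
    using wH uH H.pair_no_loops[OF Cons(3)] unfolding H1_def by (auto simp: H.in_arcsD1 H.in_arcsD2)
  ultimately show ?case using r by simp
qed

definition sd_graph :: "'a pair_pre_digraph \<Rightarrow> ('a \<times> 'a list \<times> 'a) list \<Rightarrow> 'a pair_pre_digraph" where
  "sd_graph K L = \<lparr>pverts = pverts K \<union> (\<Union>l\<in>set L. set (fst (snd l))),
     parcs = (parcs K - (\<Union>l\<in>set L. {(fst l, snd (snd l)), (snd (snd l), fst l)}))
       \<union> (\<Union>l\<in>set L. path_arcs (fst l # fst (snd l) @ [snd (snd l)]))\<rparr>"

lemma subdiv_paths:
  assumes "pair_bidirected_digraph K"
    and "\<forall>l\<in>set L. (fst l, snd (snd l)) \<in> parcs K"
    and "distinct (map (\<lambda>l. {fst l, snd (snd l)}) L)"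
    and "distinct (concat (map (\<lambda>l. fst (snd l)) L))"
    and "set (concat (map (\<lambda>l. fst (snd l)) L)) \<inter> pverts K = {}"
  shows "subdivision_pair K (sd_graph K L)"
  using assms(2-5)
proof (induction L)
  case Nil
  have "sd_graph K [] = K" by (cases K) (simp add: sd_graph_def)
  then show ?case using subdivision_pair_base[OF assms(1)] by simp
next
  case (Cons l L)
  obtain u ws v where l: "l = (u,ws,v)" by (cases l) auto
  interpret K: pair_bidirected_digraph K by (rule assms(1))
  have IH: "subdivision_pair K (sd_graph K L)"
    by (rule Cons.IH) (use Cons.prems in auto)
  have uvK: "(u,v) \<in> parcs K" using Cons(2) l by auto
  have uK: "u \<in> pverts K" "v \<in> pverts K" using uvK K.in_arcsD1 K.in_arcsD2 by auto
  have nr: "(u,v) \<notin> (\<Union>l\<in>set L. {(fst l, snd (snd l)), (snd (snd l), fst l)})"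
           "(v,u) \<notin> (\<Union>l\<in>set L. {(fst l, snd (snd l)), (snd (snd l), fst l)})"
  proof -
    have "{u,v} \<notin> (\<lambda>l. {fst l, snd (snd l)}) ` set L" using Cons(3) l by auto
    then show "(u,v) \<notin> (\<Union>l\<in>set L. {(fst l, snd (snd l)), (snd (snd l), fst l)})"
           "(v,u) \<notin> (\<Union>l\<in>set L. {(fst l, snd (snd l)), (snd (snd l), fst l)})"
      by (auto simp: insert_commute)
  qed
  have wsL: "set ws \<inter> (\<Union>l\<in>set L. set (fst (snd l))) = {}" using Cons(4) l by auto
  have wsK: "set ws \<inter> pverts K = {}" using Cons(5) l by auto
  have uvL: "u \<notin> (\<Union>l\<in>set L. set (fst (snd l)))" "v \<notin> (\<Union>l\<in>set L. set (fst (snd l)))"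
    using Cons(5) uK by auto
  have e: "(u,v) \<in> parcs (sd_graph K L)" using uvK nr by (simp add: sd_graph_def)
  have d: "set ws \<inter> pverts (sd_graph K L) = {}" using wsL wsK by (auto simp: sd_graph_def)
  have dist: "distinct ws" using Cons(4) l by auto
  from subdiv_path[OF IH e dist d]
  have r: "subdivision_pair K \<lparr>pverts = pverts (sd_graph K L) \<union> set ws,
           parcs = (parcs (sd_graph K L) - {(u,v),(v,u)}) \<union> path_arcs (u # ws @ [v])\<rparr>" .
  have PL: "(u,v) \<notin> (\<Union>l\<in>set L. path_arcs (fst l # fst (snd l) @ [snd (snd l)]))"
           "(v,u) \<notin> (\<Union>l\<in>set L. path_arcs (fst l # fst (snd l) @ [snd (snd l)]))"
  proof -
    have "\<And>l'. l' \<in> set L \<Longrightarrow> (u,v) \<notin> path_arcs (fst l' # fst (snd l') @ [snd (snd l')])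
              \<and> (v,u) \<notin> path_arcs (fst l' # fst (snd l') @ [snd (snd l')])"
    proof -
      fix l' assume abc: "l' \<in> set L"
      obtain a b c where l': "l' = (a,b,c)" by (cases l') auto
      have "(u,v) \<notin> {(a,c),(c,a)}" "(v,u) \<notin> {(a,c),(c,a)}" using nr abc l' by auto
      moreover have "u \<notin> set b" "v \<notin> set b" using uvL abc l' by auto
      ultimately show "(u,v) \<notin> path_arcs (fst l' # fst (snd l') @ [snd (snd l')])
              \<and> (v,u) \<notin> path_arcs (fst l' # fst (snd l') @ [snd (snd l')])"
        using path_arcs_sub[of a b c] l' by auto
    qed
    then show "(u,v) \<notin> (\<Union>l\<in>set L. path_arcs (fst l # fst (snd l) @ [snd (snd l)]))"
           "(v,u) \<notin> (\<Union>l\<in>set L. path_arcs (fst l # fst (snd l) @ [snd (snd l)]))" by auto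
  qed
  have "\<lparr>pverts = pverts (sd_graph K L) \<union> set ws,
           parcs = (parcs (sd_graph K L) - {(u,v),(v,u)}) \<union> path_arcs (u # ws @ [v])\<rparr>
        = sd_graph K (l # L)"
    using PL unfolding l by (auto simp: sd_graph_def)
  then show ?case using r by simp
qed


definition map_pg :: "('a \<Rightarrow> 'b) \<Rightarrow> 'a pair_pre_digraph \<Rightarrow> 'b pair_pre_digraph" where
  "map_pg f G = \<lparr>pverts = f ` pverts G, parcs = map_prod f f ` parcs G\<rparr>"

lemma map_bidir:
  assumes "pair_bidirected_digraph G" "inj_on f (pverts G)"
  shows "pair_bidirected_digraph (map_pg f G)"
proof -
  interpret G: pair_bidirected_digraph G by fact
  show ?thesis
  proof
    fix e assume "e \<in> parcs (map_pg f G)"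
    then obtain a b where "(a,b) \<in> parcs G" "e = (f a, f b)" by (auto simp: map_pg_def)
    moreover then have "a \<in> pverts G" "b \<in> pverts G" "a \<noteq> b"
      using G.in_arcsD1 G.in_arcsD2 G.pair_no_loops by fastforce+
    ultimately show "fst e \<in> pverts (map_pg f G)" "snd e \<in> pverts (map_pg f G)" "fst e \<noteq> snd e"
      using assms(2) by (auto simp: map_pg_def dest: inj_onD)
  next
    show "symmetric (map_pg f G)"
      using G.pair_sym_arcs unfolding symmetric_def sym_def by (auto simp: map_pg_def)
  qed
qed

lemma map_subdivide:
  assumes "pair_wf_digraph H" "(u,v) \<in> parcs H" "inj_on f (pverts H \<union> {w})"
  shows "map_pg f (subdivide H (u,v) w) = subdivide (map_pg f H) (f u, f v) (f w)"
proof -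
  interpret H: pair_wf_digraph H by fact
  have uv: "u \<in> pverts H" "v \<in> pverts H" using assms(2) H.in_arcsD1 H.in_arcsD2 by auto
  have A: "map_prod f f ` ((parcs H - {(u,v),(v,u)}) \<union> {(u,w),(w,u),(w,v),(v,w)})
      = (map_prod f f ` parcs H - {(f u, f v),(f v, f u)}) \<union> {(f u,f w),(f w,f u),(f w,f v),(f v,f w)}"
  proof (intro equalityI subsetI)
    fix x assume "x \<in> map_prod f f ` ((parcs H - {(u,v),(v,u)}) \<union> {(u,w),(w,u),(w,v),(v,w)})"
    then obtain a b where ab: "(a,b) \<in> (parcs H - {(u,v),(v,u)}) \<union> {(u,w),(w,u),(w,v),(v,w)}" "x = (f a, f b)" by auto
    show "x \<in> (map_prod f f ` parcs H - {(f u, f v),(f v, f u)}) \<union> {(f u,f w),(f w,f u),(f w,f v),(f v,f w)}"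
    proof (cases "(a,b) \<in> parcs H - {(u,v),(v,u)}")
      case True
      then have "a \<in> pverts H" "b \<in> pverts H" using H.in_arcsD1 H.in_arcsD2 by auto
      then have "(f a, f b) \<noteq> (f u, f v)" "(f a, f b) \<noteq> (f v, f u)"
        using True uv assms(3) by (auto dest: inj_onD)
      then show ?thesis using True ab(2) by auto
    next
      case False then show ?thesis using ab by auto
    qed
  qed auto
  show ?thesis unfolding map_pg_def subdivide.simps using A by (simp add: image_Un)
qed

lemma map_subdiv:
  assumes "subdivision_pair G H" "inj_on f (pverts H)"
  shows "subdivision_pair (map_pg f G) (map_pg f H)"
  using assms
proof (induction rule: subdivision_pair_induct)
  case base
  then show ?case by (intro subdivision_pair_base map_bidir)
next
  case (divide e w H)
  obtain u v where e: "e = (u,v)" by (cases e)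
  interpret H: pair_bidirected_digraph H using divide(3) by (rule bidirected_digraphI_subdivision)
  have inj: "inj_on f (pverts H \<union> {w})" using divide(5) by (cases e) simp
  then have IH: "subdivision_pair (map_pg f G) (map_pg f H)" using divide(4) by (auto intro: inj_on_subset)
  have "f w \<notin> pverts (map_pg f H)" using inj divide(2) by (auto simp: map_pg_def dest: inj_onD)
  moreover have "(f u, f v) \<in> parcs (map_pg f H)" using divide(1) e by (auto simp: map_pg_def)
  ultimately have "subdivision_pair (map_pg f G) (subdivide (map_pg f H) (f u, f v) (f w))"
    using IH by (intro subdivision_pair_divide)
  moreover have "map_pg f (subdivide H e w) = subdivide (map_pg f H) (f u, f v) (f w)"
    unfolding e by (rule map_subdivide[OF H.pair_wf_digraph_axioms divide(1)[unfolded e] inj])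
  ultimately show ?case by simp
qed

lemma map_K33:
  assumes "K\<^bsub>3,3\<^esub> (with_proj G)" "inj_on f (pverts G)"
  shows "K\<^bsub>3,3\<^esub> (with_proj (map_pg f G))"
proof -
  obtain U V where UV: "finite (pverts G)" "pverts G = U \<union> V" "U \<inter> V = {}" "card U = 3" "card V = 3"
    "parcs G = U \<times> V \<union> V \<times> U"
    using assms(1) unfolding complete_bipartite_digraph_pair_def by blast
  have iU: "inj_on f U" "inj_on f V" using assms(2) UV(2) by (auto intro: inj_on_subset)
  show ?thesis unfolding complete_bipartite_digraph_pair_def
  proof (intro conjI exI)
    show "finite (pverts (map_pg f G))" using UV by (simp add: map_pg_def)
    show "pverts (map_pg f G) = f ` U \<union> f ` V" using UV by (auto simp: map_pg_def)
    show "f ` U \<inter> f ` V = {}" using UV assms(2) by (auto simp: map_pg_def dest: inj_onD)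
    show "card (f ` U) = 3" "card (f ` V) = 3" using UV iU by (simp_all add: card_image)
    show "parcs (map_pg f G) = f ` U \<times> f ` V \<union> f ` V \<times> f ` U"
      using UV by (auto simp: map_pg_def)
  qed
qed

lemma map_K5:
  assumes "K\<^bsub>5\<^esub> (with_proj G)" "inj_on f (pverts G)"
  shows "K\<^bsub>5\<^esub> (with_proj (map_pg f G))"
  using assms unfolding complete_digraph_pair_def
  by (auto simp: map_pg_def card_image dest: inj_onD)

lemma nonplanar_from_map:
  assumes "subdivision_pair K H" "K\<^bsub>3,3\<^esub> (with_proj K) \<or> K\<^bsub>5\<^esub> (with_proj K)"
    and "inj_on f (pverts H)" "f ` pverts H \<subseteq> pverts G"
    and "\<forall>a\<in>parcs H. map_prod f f a \<in> parcs G" "pair_wf_digraph G"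
  shows "\<not> kuratowski_planar (with_proj G)"
proof -
  interpret G: pair_wf_digraph G by fact
  have pk: "pverts K \<subseteq> pverts H" using assms(1)
    by (induction rule: subdivision_pair_induct) auto
  have s: "subdivision_pair (map_pg f K) (map_pg f H)" using map_subdiv[OF assms(1,3)] .
  interpret H': pair_bidirected_digraph "map_pg f H" using s by (rule bidirected_digraphI_subdivision)
  have sub: "subgraph (with_proj (map_pg f H)) (with_proj G)"
  proof (rule subgraphI)
    show "wf_digraph (with_proj (map_pg f H))" by (rule H'.wf_digraph)
    show "wf_digraph (with_proj G)" by (rule G.wf_digraph)
  qed (use assms(4,5) in \<open>auto simp: map_pg_def with_proj_def compatible_def\<close>)
  have "K\<^bsub>3,3\<^esub> (with_proj (map_pg f K)) \<or> K\<^bsub>5\<^esub> (with_proj (map_pg f K))"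
    using assms(2) map_K33 map_K5 inj_on_subset[OF assms(3) pk] by blast
  then show ?thesis unfolding kuratowski_planar_def using sub s by blast
qed


lemma token_wf: "pair_wf_digraph (token_graph V E k)"
  by unfold_locales (auto simp: token_graph_def)

lemma nonplanar_sigma:
  fixes xs :: "'a list" and \<sigma> :: "nat \<times> nat \<Rightarrow> nat set"
  assumes sub: "subdivision_pair K H" and kk: "K\<^bsub>3,3\<^esub> (with_proj K) \<or> K\<^bsub>5\<^esub> (with_proj K)"
    and dist: "distinct xs" and xsV: "set xs \<subseteq> V"
    and sig: "\<forall>p\<in>pverts H. \<sigma> p \<subseteq> {0..<length xs} \<and> card (\<sigma> p) = c"
    and inj: "inj_on \<sigma> (pverts H)"
    and arcs: "\<forall>a\<in>parcs H. \<exists>x y. \<sigma> (fst a) - \<sigma> (snd a) = {x} \<and> \<sigma> (snd a) - \<sigma> (fst a) = {y}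
                     \<and> (xs ! x, xs ! y) \<in> E"
    and W: "W \<subseteq> V" "W \<inter> set xs = {}" "finite W" "card W + c = k"
  shows "\<not> kuratowski_planar (with_proj (token_graph V E k))"
proof -
  define g where "g = (\<lambda>i. xs ! i)"
  define \<phi> where "\<phi> p = g ` \<sigma> p \<union> W" for p
  have ginj: "inj_on g {0..<length xs}" using dist unfolding g_def by (auto intro!: inj_onI simp: nth_eq_iff_index_eq)
  have gset: "g ` {0..<length xs} \<subseteq> set xs" unfolding g_def by auto
  have phiX: "\<phi> p \<inter> set xs = g ` \<sigma> p" if "p \<in> pverts H" for p
    using sig that gset W(2) unfolding \<phi>_def by blast
  have phiV: "\<phi> p \<subseteq> V" if "p \<in> pverts H" for p
    using sig that gset W(1) xsV unfolding \<phi>_def by blast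
  have phicard: "card (\<phi> p) = k" if "p \<in> pverts H" for p
  proof -
    have fin: "finite (\<sigma> p)" using sig that by (meson finite_atLeastLessThan finite_subset)
    have "card (g ` \<sigma> p) = c" using sig that ginj by (metis card_image inj_on_subset)
    moreover have "g ` \<sigma> p \<inter> W = {}" using sig that gset W(2) by blast
    ultimately show ?thesis unfolding \<phi>_def using card_Un_disjoint[OF finite_imageI[OF fin] W(3)] W(4) by simp
  qed
  have phiinj: "inj_on \<phi> (pverts H)"
  proof (rule inj_onI)
    fix p q assume pq: "p \<in> pverts H" "q \<in> pverts H" "\<phi> p = \<phi> q"
    then have "g ` \<sigma> p = g ` \<sigma> q" using phiX by metis
    then have "\<sigma> p = \<sigma> q" using sig pq ginj by (meson inj_on_image_eq_iff)
    then show "p = q" using inj pq by (auto dest: inj_onD)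
  qed
  have wfH: "pair_wf_digraph H" using bidirected_digraphI_subdivision[OF sub]
    by (simp add: pair_bidirected_digraph_def pair_sym_digraph_def)
  show ?thesis
  proof (rule nonplanar_from_map[OF sub kk phiinj _ _ token_wf])
    show "\<phi> ` pverts H \<subseteq> pverts (token_graph V E k)"
      using phiV phicard by (auto simp: token_graph_def)
    show "\<forall>a\<in>parcs H. map_prod \<phi> \<phi> a \<in> parcs (token_graph V E k)"
    proof
      fix a assume a: "a \<in> parcs H"
      obtain p q where apq: "a = (p,q)" by (cases a)
      have pq: "p \<in> pverts H" "q \<in> pverts H" using a apq pair_wf_digraph.in_arcsD1[OF wfH] pair_wf_digraph.in_arcsD2[OF wfH] by auto
      obtain x y where xy: "\<sigma> p - \<sigma> q = {x}" "\<sigma> q - \<sigma> p = {y}" "(xs ! x, xs ! y) \<in> E"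
        using arcs a apq by fastforce
      have "\<phi> p - \<phi> q = g ` (\<sigma> p - \<sigma> q)"
        using phiX[OF pq(1)] phiX[OF pq(2)] ginj sig pq W(2) gset unfolding \<phi>_def
        by (auto simp: inj_on_image_set_diff) (blast dest: inj_onD)+
      moreover have "\<phi> q - \<phi> p = g ` (\<sigma> q - \<sigma> p)"
        using phiX[OF pq(1)] phiX[OF pq(2)] ginj sig pq W(2) gset unfolding \<phi>_def
        by (auto simp: inj_on_image_set_diff) (blast dest: inj_onD)+
      ultimately have "(\<phi> p - \<phi> q) \<union> (\<phi> q - \<phi> p) = {g x, g y}" using xy by auto
      then show "map_prod \<phi> \<phi> a \<in> parcs (token_graph V E k)"
        using apq phiV[OF pq(1)] phiV[OF pq(2)] phicard[OF pq(1)] phicard[OF pq(2)] xy(3)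
        unfolding token_graph_def g_def by auto
    qed
  qed
qed


definition sedge :: "(nat \<times> nat) list \<Rightarrow> nat \<Rightarrow> nat \<Rightarrow> bool" where
  "sedge sh x y \<longleftrightarrow> (x,y) \<in> set sh \<or> (y,x) \<in> set sh"

definition tadj :: "(nat \<times> nat) list \<Rightarrow> nat \<times> nat \<Rightarrow> nat \<times> nat \<Rightarrow> bool" where
  "tadj sh p q \<longleftrightarrow> (fst p = fst q \<and> sedge sh (snd p) (snd q)) \<or> (fst p = snd q \<and> sedge sh (snd p) (fst q))
      \<or> (snd p = fst q \<and> sedge sh (fst p) (snd q)) \<or> (snd p = snd q \<and> sedge sh (fst p) (fst q))"

lemma tadj_diff:
  assumes "tadj sh p q" "fst p < snd p" "fst q < snd q" "\<forall>(a,b)\<in>set sh. a \<noteq> b"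
  shows "\<exists>x y. {fst p, snd p} - {fst q, snd q} = {x} \<and> {fst q, snd q} - {fst p, snd p} = {y} \<and> sedge sh x y"
proof -
  obtain a b c d where p: "p = (a,b)" and q: "q = (c,d)" by (cases p, cases q)
  have ne: "sedge sh x y \<Longrightarrow> x \<noteq> y" for x y using assms(4) unfolding sedge_def by auto
  have lt: "a < b" "c < d" using assms(2,3) p q by auto
  from assms(1) consider "a = c" "sedge sh b d" | "a = d" "sedge sh b c" | "b = c" "sedge sh a d" | "b = d" "sedge sh a c"
    unfolding p q tadj_def by auto
  then show ?thesis
  proof cases
    case 1 then show ?thesis using ne[OF 1(2)] lt unfolding p q by (intro exI[of _ b] exI[of _ d]) auto
  next
    case 2 then show ?thesis using ne[OF 2(2)] lt unfolding p q by (intro exI[of _ b] exI[of _ c]) auto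
  next
    case 3 then show ?thesis using ne[OF 3(2)] lt unfolding p q by (intro exI[of _ a] exI[of _ d]) auto
  next
    case 4 then show ?thesis using ne[OF 4(2)] lt unfolding p q by (intro exI[of _ a] exI[of _ c]) auto
  qed
qed

lemma diffdiff: "P \<subseteq> S \<Longrightarrow> Q \<subseteq> S \<Longrightarrow> (S - P) - (S - Q) = Q - P" by blast

lemma witness_nonplanar:
  fixes xs :: "'a list" and K H :: "(nat \<times> nat) pair_pre_digraph"
  assumes sg: "simple_graph V E" and dist: "distinct xs" and xsV: "set xs \<subseteq> V"
    and m8: "length xs \<le> 8" and n11: "11 \<le> card V" and k: "2 \<le> k" "k \<le> card V - 2"
    and shE: "\<forall>(a,b)\<in>set sh. a < length xs \<and> b < length xs \<and> a \<noteq> b \<and> (xs!a, xs!b) \<in> E"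
    and sub: "subdivision_pair K H" and kk: "K\<^bsub>3,3\<^esub> (with_proj K) \<or> K\<^bsub>5\<^esub> (with_proj K)"
    and vH: "\<forall>p\<in>pverts H. fst p < snd p \<and> snd p < length xs"
    and aH: "\<forall>a\<in>parcs H. tadj sh (fst a) (snd a)"
  shows "\<not> kuratowski_planar (with_proj (token_graph V E k))"
proof -
  let ?m = "length xs"
  have finV: "finite V" and symE: "sym E" using sg by (auto simp: simple_graph_def)
  have sedgeE: "(xs ! x, xs ! y) \<in> E" if "sedge sh x y" for x y
    using that shE symE unfolding sedge_def by (auto dest: symD)
  have loopf: "\<forall>(a,b)\<in>set sh. a \<noteq> b" using shE by auto
  have pH: "fst p < snd p" "snd p < ?m" if "p \<in> pverts H" for p using vH that by auto
  have wfH: "pair_wf_digraph H" using bidirected_digraphI_subdivision[OF sub]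
    by (simp add: pair_bidirected_digraph_def pair_sym_digraph_def)
  have arcV: "fst a \<in> pverts H" "snd a \<in> pverts H" if "a \<in> parcs H" for a
    using that pair_wf_digraph.arc_fst_in_verts[OF wfH] pair_wf_digraph.arc_snd_in_verts[OF wfH] by auto
  have cardR: "card (V - set xs) = card V - ?m"
    using xsV finV dist by (simp add: card_Diff_subset distinct_card)
  have injpair: "p = q" if "p \<in> pverts H" "q \<in> pverts H" "{fst p, snd p} = {fst q, snd q}" for p q
    using pH[OF that(1)] pH[OF that(2)] that(3) by (cases p, cases q) (auto simp: doubleton_eq_iff)
  show ?thesis
  proof (cases "k - 2 \<le> card V - ?m")
    case True
    then have kc: "k - 2 \<le> card (V - set xs)" using cardR by simp
    obtain W where W: "W \<subseteq> V - set xs" "card W = k - 2" "finite W"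
      using obtain_subset_with_card_n[OF kc] by blast
    show ?thesis
    proof (rule nonplanar_sigma[OF sub kk dist xsV, where \<sigma> = "\<lambda>p. {fst p, snd p}" and c = 2 and W = W])
      show "\<forall>p\<in>pverts H. {fst p, snd p} \<subseteq> {0..<?m} \<and> card {fst p, snd p} = 2"
      proof
        fix p assume "p \<in> pverts H"
        from pH[OF this] show "{fst p, snd p} \<subseteq> {0..<?m} \<and> card {fst p, snd p} = 2" by auto
      qed
      show "inj_on (\<lambda>p. {fst p, snd p}) (pverts H)" by (rule inj_onI) (rule injpair; assumption)
      show "\<forall>a\<in>parcs H. \<exists>x y. {fst (fst a), snd (fst a)} - {fst (snd a), snd (snd a)} = {x} \<and>
             {fst (snd a), snd (snd a)} - {fst (fst a), snd (fst a)} = {y} \<and> (xs ! x, xs ! y) \<in> E"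
      proof
        fix a assume a: "a \<in> parcs H"
        have ta: "tadj sh (fst a) (snd a)" using aH a by blast
        obtain x y where xy: "{fst (fst a), snd (fst a)} - {fst (snd a), snd (snd a)} = {x}"
             "{fst (snd a), snd (snd a)} - {fst (fst a), snd (fst a)} = {y}" "sedge sh x y"
          using tadj_diff[OF ta pH(1)[OF arcV(1)[OF a]] pH(1)[OF arcV(2)[OF a]] loopf] by blast
        show "\<exists>x y. {fst (fst a), snd (fst a)} - {fst (snd a), snd (snd a)} = {x} \<and>
             {fst (snd a), snd (snd a)} - {fst (fst a), snd (fst a)} = {y} \<and> (xs ! x, xs ! y) \<in> E"
          using xy(1,2) sedgeE[OF xy(3)] by blast
      qed
      show "card W + 2 = k" using W(2) k by simp
      show "W \<subseteq> V" "W \<inter> set xs = {}" "finite W" using W by auto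
    qed
  next
    case False
    have kc: "k - (?m - 2) \<le> card (V - set xs)" using cardR k m8 n11 by linarith
    obtain W where W: "W \<subseteq> V - set xs" "card W = k - (?m - 2)" "finite W"
      using obtain_subset_with_card_n[OF kc] by blast
    show ?thesis
    proof (rule nonplanar_sigma[OF sub kk dist xsV, where \<sigma> = "\<lambda>p. {0..<?m} - {fst p, snd p}" and c = "?m - 2" and W = W])
      show "\<forall>p\<in>pverts H. {0..<?m} - {fst p, snd p} \<subseteq> {0..<?m} \<and> card ({0..<?m} - {fst p, snd p}) = ?m - 2"
      proof
        fix p assume "p \<in> pverts H"
        from pH[OF this] have "{fst p, snd p} \<subseteq> {0..<?m}" "card {fst p, snd p} = 2" by auto
        then show "{0..<?m} - {fst p, snd p} \<subseteq> {0..<?m} \<and> card ({0..<?m} - {fst p, snd p}) = ?m - 2"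
          by (simp add: card_Diff_subset)
      qed
      show "inj_on (\<lambda>p. {0..<?m} - {fst p, snd p}) (pverts H)"
      proof (rule inj_onI)
        fix p q assume pq: "p \<in> pverts H" "q \<in> pverts H" "{0..<?m} - {fst p, snd p} = {0..<?m} - {fst q, snd q}"
        have "{fst p, snd p} = {fst q, snd q}"
        proof -
          have "{fst p, snd p} = {0..<?m} - ({0..<?m} - {fst p, snd p})" using pH[OF pq(1)] by auto
          also have "\<dots> = {0..<?m} - ({0..<?m} - {fst q, snd q})" using pq(3) by simp
          also have "\<dots> = {fst q, snd q}" using pH[OF pq(2)] by auto
          finally show ?thesis .
        qed
        then show "p = q" using injpair pq by blast
      qed
      show "\<forall>a\<in>parcs H. \<exists>x y. ({0..<?m} - {fst (fst a), snd (fst a)}) - ({0..<?m} - {fst (snd a), snd (snd a)}) = {x} \<and>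
             ({0..<?m} - {fst (snd a), snd (snd a)}) - ({0..<?m} - {fst (fst a), snd (fst a)}) = {y} \<and> (xs ! x, xs ! y) \<in> E"
      proof
        fix a assume a: "a \<in> parcs H"
        obtain x y where xy: "{fst (fst a), snd (fst a)} - {fst (snd a), snd (snd a)} = {x}"
             "{fst (snd a), snd (snd a)} - {fst (fst a), snd (fst a)} = {y}" "sedge sh x y"
          using tadj_diff[OF _ pH(1)[OF arcV(1)[OF a]] pH(1)[OF arcV(2)[OF a]] loopf] aH a by meson
        have r1: "{fst (fst a), snd (fst a)} \<subseteq> {0..<?m}" "{fst (snd a), snd (snd a)} \<subseteq> {0..<?m}"
          using pH[OF arcV(1)[OF a]] pH[OF arcV(2)[OF a]] by auto
        have "({0..<?m} - {fst (fst a), snd (fst a)}) - ({0..<?m} - {fst (snd a), snd (snd a)}) = {y}"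
          using xy(2) diffdiff[OF r1(1) r1(2)] by simp
        moreover have "({0..<?m} - {fst (snd a), snd (snd a)}) - ({0..<?m} - {fst (fst a), snd (fst a)}) = {x}"
          using xy(1) diffdiff[OF r1(2) r1(1)] by simp
        moreover have "sedge sh y x" using xy(3) unfolding sedge_def by auto
        ultimately show "\<exists>x y. ({0..<?m} - {fst (fst a), snd (fst a)}) - ({0..<?m} - {fst (snd a), snd (snd a)}) = {x} \<and>
             ({0..<?m} - {fst (snd a), snd (snd a)}) - ({0..<?m} - {fst (fst a), snd (fst a)}) = {y} \<and> (xs ! x, xs ! y) \<in> E"
          using sedgeE[OF \<open>sedge sh y x\<close>] by blast
      qed
      have "?m - 2 \<le> k" using False m8 n11 by linarith
      then show "card W + (?m - 2) = k" using W(2) by simp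
      show "W \<subseteq> V" "W \<inter> set xs = {}" "finite W" using W by auto
    qed
  qed
qed


fun consec_ok :: "('a \<Rightarrow> 'a \<Rightarrow> bool) \<Rightarrow> 'a list \<Rightarrow> bool" where
  "consec_ok P (x # y # zs) = (P x y \<and> P y x \<and> consec_ok P (y # zs))"
| "consec_ok P _ = True"

lemma consec_ok_path_arcs: "consec_ok P xs \<Longrightarrow> a \<in> path_arcs xs \<Longrightarrow> P (fst a) (snd a)"
  by (induction P xs rule: consec_ok.induct) auto

definition lexlt :: "nat \<times> nat \<Rightarrow> nat \<times> nat \<Rightarrow> bool" where
  "lexlt p q \<longleftrightarrow> fst p < fst q \<or> (fst p = fst q \<and> snd p < snd q)"

lemma sd_graph_general:
  fixes K :: "(nat \<times> nat) pair_pre_digraph" and L :: "((nat \<times> nat) \<times> (nat \<times> nat) list \<times> (nat \<times> nat)) list"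
  assumes bi: "pair_bidirected_digraph K"
    and inK: "\<forall>l\<in>set L. (fst l, snd (snd l)) \<in> parcs K"
    and ord: "\<forall>l\<in>set L. lexlt (fst l) (snd (snd l))"
    and d1: "distinct (map (\<lambda>l. (fst l, snd (snd l))) L)"
    and d2: "distinct (concat (map (\<lambda>l. fst (snd l)) L))"
    and d3: "set (concat (map (\<lambda>l. fst (snd l)) L)) \<inter> pverts K = {}"
    and cov: "\<forall>a\<in>parcs K. a \<in> set (map (\<lambda>l. (fst l, snd (snd l))) L) \<or> (snd a, fst a) \<in> set (map (\<lambda>l. (fst l, snd (snd l))) L)"
    and vP: "\<forall>p\<in>pverts K \<union> set (concat (map (\<lambda>l. fst (snd l)) L)). P p"
    and aQ: "\<forall>l\<in>set L. consec_ok Q (fst l # fst (snd l) @ [snd (snd l)])"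
  shows "subdivision_pair K (sd_graph K L)" "\<forall>p\<in>pverts (sd_graph K L). P p"
    "\<forall>a\<in>parcs (sd_graph K L). Q (fst a) (snd a)"
proof -
  have "distinct (map (\<lambda>l. {fst l, snd (snd l)}) L)"
    unfolding distinct_map
  proof
    show "distinct L" using d1 by (simp add: distinct_map)
    show "inj_on (\<lambda>l. {fst l, snd (snd l)}) (set L)"
    proof (rule inj_onI)
      fix l l' assume l: "l \<in> set L" "l' \<in> set L" "{fst l, snd (snd l)} = {fst l', snd (snd l')}"
      have o: "lexlt (fst l) (snd (snd l))" "lexlt (fst l') (snd (snd l'))" using ord l by auto
      have "(fst l, snd (snd l)) = (fst l', snd (snd l'))"
        using l(3) o unfolding lexlt_def doubleton_eq_iff by auto
      then show "l = l'" using d1 l(1,2) by (auto simp: distinct_map dest: inj_onD)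
    qed
  qed
  then show sub: "subdivision_pair K (sd_graph K L)"
    by (intro subdiv_paths[OF bi inK _ d2 d3])
  show "\<forall>p\<in>pverts (sd_graph K L). P p" using vP by (auto simp: sd_graph_def)
  have "parcs K \<subseteq> (\<Union>l\<in>set L. {(fst l, snd (snd l)), (snd (snd l), fst l)})"
    using cov by force
  then have "parcs (sd_graph K L) \<subseteq> (\<Union>l\<in>set L. path_arcs (fst l # fst (snd l) @ [snd (snd l)]))"
    by (auto simp: sd_graph_def)
  then show "\<forall>a\<in>parcs (sd_graph K L). Q (fst a) (snd a)"
    using aQ consec_ok_path_arcs by blast
qed

definition K33g :: "'a list \<Rightarrow> 'a list \<Rightarrow> 'a pair_pre_digraph" where
  "K33g Us Vs = \<lparr>pverts = set Us \<union> set Vs, parcs = set Us \<times> set Vs \<union> set Vs \<times> set Us\<rparr>"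

definition K5g :: "'a list \<Rightarrow> 'a pair_pre_digraph" where
  "K5g Bs = \<lparr>pverts = set Bs, parcs = {(u,v). u \<in> set Bs \<and> v \<in> set Bs \<and> u \<noteq> v}\<rparr>"

lemma K33g_props:
  assumes "distinct Us" "distinct Vs" "length Us = 3" "length Vs = 3" "set Us \<inter> set Vs = {}"
  shows "pair_bidirected_digraph (K33g Us Vs)" "K\<^bsub>3,3\<^esub> (with_proj (K33g Us Vs))"
proof -
  show "pair_bidirected_digraph (K33g Us Vs)"
    by unfold_locales (use assms in \<open>auto simp: K33g_def symmetric_def sym_def\<close>)
  show "K\<^bsub>3,3\<^esub> (with_proj (K33g Us Vs))"
    unfolding complete_bipartite_digraph_pair_def
    by (rule conjI, simp add: K33g_def, rule exI[of _ "set Us"], rule exI[of _ "set Vs"])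
       (use assms in \<open>auto simp: K33g_def distinct_card\<close>)
qed

lemma K5g_props:
  assumes "distinct Bs" "length Bs = 5"
  shows "pair_bidirected_digraph (K5g Bs)" "K\<^bsub>5\<^esub> (with_proj (K5g Bs))"
proof -
  show "pair_bidirected_digraph (K5g Bs)"
    by unfold_locales (use assms in \<open>auto simp: K5g_def symmetric_def sym_def\<close>)
  show "K\<^bsub>5\<^esub> (with_proj (K5g Bs))"
    unfolding complete_digraph_pair_def using assms by (auto simp: K5g_def distinct_card)
qed


lemma K33_nonplanar:
  fixes xs :: "'a list" and L :: "((nat \<times> nat) \<times> (nat \<times> nat) list \<times> (nat \<times> nat)) list"
  assumes sg: "simple_graph V E" and dist: "distinct xs" and xsV: "set xs \<subseteq> V"
    and m8: "length xs \<le> 8" and n11: "11 \<le> card V" and k: "2 \<le> k" "k \<le> card V - 2"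
    and shE: "\<forall>(a,b)\<in>set sh. a < length xs \<and> b < length xs \<and> a \<noteq> b \<and> (xs!a, xs!b) \<in> E"
    and UV: "distinct Us" "distinct Vs" "length Us = 3" "length Vs = 3" "set Us \<inter> set Vs = {}"
    and inK: "\<forall>l\<in>set L. (fst l, snd (snd l)) \<in> parcs (K33g Us Vs)"
    and ord: "\<forall>l\<in>set L. lexlt (fst l) (snd (snd l))"
    and d1: "distinct (map (\<lambda>l. (fst l, snd (snd l))) L)"
    and d2: "distinct (concat (map (\<lambda>l. fst (snd l)) L))"
    and d3: "set (concat (map (\<lambda>l. fst (snd l)) L)) \<inter> pverts (K33g Us Vs) = {}"
    and cov': "\<forall>u\<in>set Us. \<forall>v\<in>set Vs. (u,v) \<in> set (map (\<lambda>l. (fst l, snd (snd l))) L) \<or> (v,u) \<in> set (map (\<lambda>l. (fst l, snd (snd l))) L)"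
    and vP: "\<forall>p\<in>pverts (K33g Us Vs) \<union> set (concat (map (\<lambda>l. fst (snd l)) L)). fst p < snd p \<and> snd p < length xs"
    and aQ: "\<forall>l\<in>set L. consec_ok (tadj sh) (fst l # fst (snd l) @ [snd (snd l)])"
  shows "\<not> kuratowski_planar (with_proj (token_graph V E k))"
proof -
  note K = K33g_props[OF UV]
  have cov: "\<forall>a\<in>parcs (K33g Us Vs). a \<in> set (map (\<lambda>l. (fst l, snd (snd l))) L) \<or> (snd a, fst a) \<in> set (map (\<lambda>l. (fst l, snd (snd l))) L)"
    using cov' unfolding K33g_def by fastforce
  note G = sd_graph_general[OF K(1) inK ord d1 d2 d3 cov vP aQ]
  show ?thesis
    by (rule witness_nonplanar[OF sg dist xsV m8 n11 k shE G(1) _ G(2) G(3)]) (use K(2) in blast)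
qed

lemma K5_nonplanar:
  fixes xs :: "'a list" and L :: "((nat \<times> nat) \<times> (nat \<times> nat) list \<times> (nat \<times> nat)) list"
  assumes sg: "simple_graph V E" and dist: "distinct xs" and xsV: "set xs \<subseteq> V"
    and m8: "length xs \<le> 8" and n11: "11 \<le> card V" and k: "2 \<le> k" "k \<le> card V - 2"
    and shE: "\<forall>(a,b)\<in>set sh. a < length xs \<and> b < length xs \<and> a \<noteq> b \<and> (xs!a, xs!b) \<in> E"
    and UV: "distinct Bs" "length Bs = 5"
    and inK: "\<forall>l\<in>set L. (fst l, snd (snd l)) \<in> parcs (K5g Bs)"
    and ord: "\<forall>l\<in>set L. lexlt (fst l) (snd (snd l))"
    and d1: "distinct (map (\<lambda>l. (fst l, snd (snd l))) L)"
    and d2: "distinct (concat (map (\<lambda>l. fst (snd l)) L))"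
    and d3: "set (concat (map (\<lambda>l. fst (snd l)) L)) \<inter> pverts (K5g Bs) = {}"
    and cov': "\<forall>u\<in>set Bs. \<forall>v\<in>set Bs. u \<noteq> v \<longrightarrow> (u,v) \<in> set (map (\<lambda>l. (fst l, snd (snd l))) L) \<or> (v,u) \<in> set (map (\<lambda>l. (fst l, snd (snd l))) L)"
    and vP: "\<forall>p\<in>pverts (K5g Bs) \<union> set (concat (map (\<lambda>l. fst (snd l)) L)). fst p < snd p \<and> snd p < length xs"
    and aQ: "\<forall>l\<in>set L. consec_ok (tadj sh) (fst l # fst (snd l) @ [snd (snd l)])"
  shows "\<not> kuratowski_planar (with_proj (token_graph V E k))"
proof -
  note K = K5g_props[OF UV]
  have cov: "\<forall>a\<in>parcs (K5g Bs). a \<in> set (map (\<lambda>l. (fst l, snd (snd l))) L) \<or> (snd a, fst a) \<in> set (map (\<lambda>l. (fst l, snd (snd l))) L)"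
    using cov' unfolding K5g_def by fastforce
  note G = sd_graph_general[OF K(1) inK ord d1 d2 d3 cov vP aQ]
  show ?thesis
    by (rule witness_nonplanar[OF sg dist xsV m8 n11 k shE G(1) _ G(2) G(3)]) (use K(2) in blast)
qed

lemma shape_W1:
  assumes "simple_graph V E" "11 \<le> card V" "2 \<le> k" "k \<le> card V - 2"
    and "distinct [c,aa,ab,ac,ad,ae]" "set [c,aa,ab,ac,ad,ae] \<subseteq> V"
    and "(c,aa) \<in> E" and "(c,ab) \<in> E" and "(c,ac) \<in> E" and "(c,ad) \<in> E" and "(c,ae) \<in> E"
  shows "\<not> kuratowski_planar (with_proj (token_graph V E k))"
  by (rule K5_nonplanar[where xs="[c,aa,ab,ac,ad,ae]" and sh="[(0,1),(0,2),(0,3),(0,4),(0,5)]" and Bs="[(0,2),(0,4),(0,1),(0,5),(0,3)]" and L="[((0,2),[(2,4)],(0,4)), ((0,2),[(2,3)],(0,3)), ((0,1),[(1,2)],(0,2)), ((0,2),[(2,5)],(0,5)), ((0,4),[(4,5)],(0,5)), ((0,3),[(3,4)],(0,4)), ((0,1),[(1,4)],(0,4)), ((0,1),[(1,3)],(0,3)), ((0,1),[(1,5)],(0,5)), ((0,3),[(3,5)],(0,5))]"])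
     (use assms in \<open>simp_all add: K33g_def K5g_def lexlt_def tadj_def sedge_def\<close>)

lemma shape_W2:
  assumes "simple_graph V E" "11 \<le> card V" "2 \<le> k" "k \<le> card V - 2"
    and "distinct [c,aa,ab,ac,ba,bb]" "set [c,aa,ab,ac,ba,bb] \<subseteq> V"
    and "(c,aa) \<in> E" and "(c,ab) \<in> E" and "(c,ac) \<in> E" and "(c,ba) \<in> E" and "(ba,bb) \<in> E"
  shows "\<not> kuratowski_planar (with_proj (token_graph V E k))"
  by (rule K33_nonplanar[where xs="[c,aa,ab,ac,ba,bb]" and sh="[(0,1),(0,2),(0,3),(0,4),(4,5)]" and Us="[(3,4),(2,4),(1,4)]" and Vs="[(0,2),(0,5),(0,4)]" and L="[((0,5),[(3,5)],(3,4)), ((0,2),[(2,3),(0,3)],(3,4)), ((0,4),[],(3,4)), ((0,2),[],(2,4)), ((0,2),[(1,2),(0,1)],(1,4)), ((0,4),[],(2,4)), ((0,5),[(2,5)],(2,4)), ((0,5),[(1,5)],(1,4)), ((0,4),[],(1,4))]"])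
     (use assms in \<open>simp_all add: K33g_def K5g_def lexlt_def tadj_def sedge_def\<close>)

lemma shape_W3:
  assumes "simple_graph V E" "11 \<le> card V" "2 \<le> k" "k \<le> card V - 2"
    and "distinct [c,d,aa,ab,ba,bb]" "set [c,d,aa,ab,ba,bb] \<subseteq> V"
    and "(c,d) \<in> E" and "(c,aa) \<in> E" and "(c,ab) \<in> E" and "(d,ba) \<in> E" and "(d,bb) \<in> E"
  shows "\<not> kuratowski_planar (with_proj (token_graph V E k))"
  by (rule K5_nonplanar[where xs="[c,d,aa,ab,ba,bb]" and sh="[(0,1),(0,2),(0,3),(1,4),(1,5)]" and Bs="[(1,2),(0,4),(0,5),(0,1),(1,3)]" and L="[((0,4),[(2,4)],(1,2)), ((0,5),[(2,5)],(1,2)), ((1,2),[(0,2),(2,3),(0,3)],(1,3)), ((0,1),[],(1,2)), ((0,1),[],(0,4)), ((0,4),[(3,4)],(1,3)), ((0,4),[(1,4),(4,5),(1,5)],(0,5)), ((0,5),[(3,5)],(1,3)), ((0,1),[],(0,5)), ((0,1),[],(1,3))]"])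
     (use assms in \<open>simp_all add: K33g_def K5g_def lexlt_def tadj_def sedge_def\<close>)

lemma shape_W4:
  assumes "simple_graph V E" "11 \<le> card V" "2 \<le> k" "k \<le> card V - 2"
    and "distinct [c,e,d,aa,ab,ba,bb]" "set [c,e,d,aa,ab,ba,bb] \<subseteq> V"
    and "(c,e) \<in> E" and "(e,d) \<in> E" and "(c,aa) \<in> E" and "(c,ab) \<in> E" and "(d,ba) \<in> E" and "(d,bb) \<in> E"
  shows "\<not> kuratowski_planar (with_proj (token_graph V E k))"
  by (rule K33_nonplanar[where xs="[c,e,d,aa,ab,ba,bb]" and sh="[(0,1),(1,2),(0,3),(0,4),(2,5),(2,6)]" and Us="[(0,2),(2,3),(2,4)]" and Vs="[(0,5),(1,3),(0,6)]" and L="[((0,2),[(0,1)],(1,3)), ((0,2),[],(0,5)), ((0,2),[],(0,6)), ((0,5),[(3,5)],(2,3)), ((0,5),[(4,5)],(2,4)), ((1,3),[],(2,3)), ((0,6),[(3,6)],(2,3)), ((1,3),[(0,3),(3,4),(0,4),(1,4)],(2,4)), ((0,6),[(4,6)],(2,4))]"])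
     (use assms in \<open>simp_all add: K33g_def K5g_def lexlt_def tadj_def sedge_def\<close>)

lemma shape_W5:
  assumes "simple_graph V E" "11 \<le> card V" "2 \<le> k" "k \<le> card V - 2"
    and "distinct [c,ea,eb,d,aa,ab,ba,bb]" "set [c,ea,eb,d,aa,ab,ba,bb] \<subseteq> V"
    and "(c,ea) \<in> E" and "(ea,eb) \<in> E" and "(eb,d) \<in> E" and "(c,aa) \<in> E" and "(c,ab) \<in> E" and "(d,ba) \<in> E" and "(d,bb) \<in> E"
  shows "\<not> kuratowski_planar (with_proj (token_graph V E k))"
  by (rule K33_nonplanar[where xs="[c,ea,eb,d,aa,ab,ba,bb]" and sh="[(0,1),(1,2),(2,3),(0,4),(0,5),(3,6),(3,7)]" and Us="[(0,3),(0,7),(2,5)]" and Vs="[(3,4),(0,2),(3,5)]" and L="[((0,3),[],(3,4)), ((0,3),[],(3,5)), ((0,2),[],(0,3)), ((0,7),[(4,7)],(3,4)), ((2,5),[(1,5),(0,5),(4,5),(0,4),(1,4),(2,4)],(3,4)), ((0,2),[(1,2),(1,3),(2,3),(2,7),(1,7)],(0,7)), ((0,2),[],(2,5)), ((0,7),[(5,7)],(3,5)), ((2,5),[],(3,5))]"])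
     (use assms in \<open>simp_all add: K33g_def K5g_def lexlt_def tadj_def sedge_def\<close>)

lemma shape_W6:
  assumes "simple_graph V E" "11 \<le> card V" "2 \<le> k" "k \<le> card V - 2"
    and "distinct [c,a,b,da,db,dc,dd]" "set [c,a,b,da,db,dc,dd] \<subseteq> V"
    and "(c,a) \<in> E" and "(c,b) \<in> E" and "(c,da) \<in> E" and "(da,db) \<in> E" and "(db,dc) \<in> E" and "(dc,dd) \<in> E"
  shows "\<not> kuratowski_planar (with_proj (token_graph V E k))"
  by (rule K33_nonplanar[where xs="[c,a,b,da,db,dc,dd]" and sh="[(0,1),(0,2),(0,3),(3,4),(4,5),(5,6)]" and Us="[(3,5),(1,5),(2,5)]" and Vs="[(0,5),(0,6),(0,4)]" and L="[((0,4),[(3,4)],(3,5)), ((0,5),[],(3,5)), ((0,6),[(3,6)],(3,5)), ((0,4),[(1,4)],(1,5)), ((0,5),[],(1,5)), ((0,6),[(1,6)],(1,5)), ((0,5),[],(2,5)), ((0,6),[(2,6)],(2,5)), ((0,4),[(0,3),(2,3),(2,4)],(2,5))]"])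
     (use assms in \<open>simp_all add: K33g_def K5g_def lexlt_def tadj_def sedge_def\<close>)

fun epath :: "('a \<times> 'a) set \<Rightarrow> 'a list \<Rightarrow> bool" where
  "epath E (a # b # r) = ((a,b) \<in> E \<and> epath E (b # r))"
| "epath E _ = True"

lemma symG: "simple_graph V E \<Longrightarrow> (a,b) \<in> E \<Longrightarrow> (b,a) \<in> E"
  unfolding simple_graph_def by (auto dest: symD)

lemma epath_append: "epath E (xs @ [a, b]) = (epath E (xs @ [a]) \<and> (a,b) \<in> E)"
proof (induction xs)
  case Nil then show ?case by simp
next
  case (Cons x xs) then show ?case by (cases xs) auto
qed

lemma epath_rev: "simple_graph V E \<Longrightarrow> epath E xs \<Longrightarrow> epath E (rev xs)"
proof (induction E xs rule: epath.induct)
  case (1 E a b r)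
  then have "epath E (rev r @ [b])" by simp
  moreover have "(b,a) \<in> E" using 1 symG by fastforce
  ultimately show ?case by (simp add: epath_append)
qed auto

lemma grow:
  assumes sg: "simple_graph V E" and con: "connected_graph V E" and S: "set S \<subseteq> V"
    and ne: "S \<noteq> []" and lt: "card (set S) < card V"
  shows "\<exists>z y. z \<in> set S \<and> y \<in> V \<and> y \<notin> set S \<and> (z,y) \<in> E"
proof -
  obtain a where a: "a \<in> set S" using ne by (cases S) auto
  have "set S \<noteq> V" using lt by auto
  then obtain b where b: "b \<in> V" "b \<notin> set S" using S by blast
  have "(a,b) \<in> E\<^sup>*" using con a b S unfolding connected_graph_def by blast
  then have "\<exists>z y. z \<in> set S \<and> y \<notin> set S \<and> (z,y) \<in> E"
    using a b(2) by (induction rule: rtrancl_induct) auto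
  then show ?thesis using sg unfolding simple_graph_def by blast
qed

lemma caseB_1_0:
  assumes sg: "simple_graph V E" and con: "connected_graph V E" and n11: "11 \<le> card V"
    and k1: "2 \<le> k" and k2: "k \<le> card V - 2"
    and lp: "\<forall>Q. distinct Q \<and> set Q \<subseteq> V \<and> epath E Q \<longrightarrow> length Q \<le> 1"
    and dA: "distinct [va,x]" and sA: "set [va,x] \<subseteq> V"
    and eP: "epath E [va]" and ex: "(va,x) \<in> E"
  shows "\<not> kuratowski_planar (with_proj (token_graph V E k))"
proof -
  note EF = eP[simplified] ex symG[OF sg ex] epath_rev[OF sg eP, simplified]
  have False using lp[rule_format, of "[va,x]"] dA sA EF by auto
  then have ?thesis ..
  then show ?thesis .
qed

lemma caseB_2_0:
  assumes sg: "simple_graph V E" and con: "connected_graph V E" and n11: "11 \<le> card V"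
    and k1: "2 \<le> k" and k2: "k \<le> card V - 2"
    and lp: "\<forall>Q. distinct Q \<and> set Q \<subseteq> V \<and> epath E Q \<longrightarrow> length Q \<le> 2"
    and dA: "distinct [va,vb,x]" and sA: "set [va,vb,x] \<subseteq> V"
    and eP: "epath E [va,vb]" and ex: "(va,x) \<in> E"
  shows "\<not> kuratowski_planar (with_proj (token_graph V E k))"
proof -
  note EF = eP[simplified] ex symG[OF sg ex] epath_rev[OF sg eP, simplified]
  have False using lp[rule_format, of "[vb,va,x]"] dA sA EF by auto
  then have ?thesis ..
  then show ?thesis .
qed

lemma caseB_2_1:
  assumes sg: "simple_graph V E" and con: "connected_graph V E" and n11: "11 \<le> card V"
    and k1: "2 \<le> k" and k2: "k \<le> card V - 2"
    and lp: "\<forall>Q. distinct Q \<and> set Q \<subseteq> V \<and> epath E Q \<longrightarrow> length Q \<le> 2"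
    and dA: "distinct [va,vb,x]" and sA: "set [va,vb,x] \<subseteq> V"
    and eP: "epath E [va,vb]" and ex: "(vb,x) \<in> E"
  shows "\<not> kuratowski_planar (with_proj (token_graph V E k))"
proof -
  note EF = eP[simplified] ex symG[OF sg ex] epath_rev[OF sg eP, simplified]
  have False using lp[rule_format, of "[va,vb,x]"] dA sA EF by auto
  then have ?thesis ..
  then show ?thesis .
qed

lemma caseB_3_0:
  assumes sg: "simple_graph V E" and con: "connected_graph V E" and n11: "11 \<le> card V"
    and k1: "2 \<le> k" and k2: "k \<le> card V - 2"
    and lp: "\<forall>Q. distinct Q \<and> set Q \<subseteq> V \<and> epath E Q \<longrightarrow> length Q \<le> 3"
    and dA: "distinct [va,vb,vc,x]" and sA: "set [va,vb,vc,x] \<subseteq> V"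
    and eP: "epath E [va,vb,vc]" and ex: "(va,x) \<in> E"
  shows "\<not> kuratowski_planar (with_proj (token_graph V E k))"
proof -
  note EF = eP[simplified] ex symG[OF sg ex] epath_rev[OF sg eP, simplified]
  have False using lp[rule_format, of "[vc,vb,va,x]"] dA sA EF by auto
  then have ?thesis ..
  then show ?thesis .
qed

lemma caseB_3_1:
  assumes sg: "simple_graph V E" and con: "connected_graph V E" and n11: "11 \<le> card V"
    and k1: "2 \<le> k" and k2: "k \<le> card V - 2"
    and lp: "\<forall>Q. distinct Q \<and> set Q \<subseteq> V \<and> epath E Q \<longrightarrow> length Q \<le> 3"
    and dA: "distinct [va,vb,vc,x]" and sA: "set [va,vb,vc,x] \<subseteq> V"
    and eP: "epath E [va,vb,vc]" and ex: "(vb,x) \<in> E"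
  shows "\<not> kuratowski_planar (with_proj (token_graph V E k))"
proof -
  note EF = eP[simplified] ex symG[OF sg ex] epath_rev[OF sg eP, simplified]
  have cS: "card (set [va,vb,vc,x]) < card V" using n11 distinct_card[OF dA] by simp
  obtain za ya where zaS: "za \<in> set [va,vb,vc,x]" and yaV: "ya \<in> V" and yan: "ya \<notin> set [va,vb,vc,x]" and zaE: "(za,ya) \<in> E"
    using grow[OF sg con sA _ cS] by auto
  have dA: "distinct [va,vb,vc,x,ya]" using dA yan by auto
  have sA: "set [va,vb,vc,x,ya] \<subseteq> V" using sA yaV by simp
  have "za = va \<or> za = vb \<or> za = vc \<or> za = x" using zaS by simp
  moreover { assume zz: "za = va"
    have e1: "(va,ya) \<in> E" using zaE zz by simp
    have e2: "(ya,va) \<in> E" using symG[OF sg e1] .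
    note EF = EF e1 e2
    have False using lp[rule_format, of "[vc,vb,va,ya]"] dA sA EF by auto
    then have ?thesis ..
  }
  moreover { assume zz: "za = vb"
    have e1: "(vb,ya) \<in> E" using zaE zz by simp
    have e2: "(ya,vb) \<in> E" using symG[OF sg e1] .
    note EF = EF e1 e2
    have cS: "card (set [va,vb,vc,x,ya]) < card V" using n11 distinct_card[OF dA] by simp
    obtain zb yb where zbS: "zb \<in> set [va,vb,vc,x,ya]" and ybV: "yb \<in> V" and ybn: "yb \<notin> set [va,vb,vc,x,ya]" and zbE: "(zb,yb) \<in> E"
      using grow[OF sg con sA _ cS] by auto
    have dA: "distinct [va,vb,vc,x,ya,yb]" using dA ybn by auto
    have sA: "set [va,vb,vc,x,ya,yb] \<subseteq> V" using sA ybV by simp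
    have "zb = va \<or> zb = vb \<or> zb = vc \<or> zb = x \<or> zb = ya" using zbS by simp
    moreover { assume zz: "zb = va"
      have e1: "(va,yb) \<in> E" using zbE zz by simp
      have e2: "(yb,va) \<in> E" using symG[OF sg e1] .
      note EF = EF e1 e2
      have ?thesis by (rule shape_W2[OF sg n11 k1 k2, where c=vb and aa=vc and ab=x and ac=ya and ba=va and bb=yb]) (use dA sA EF in auto)
    }
    moreover { assume zz: "zb = vb"
      have e1: "(vb,yb) \<in> E" using zbE zz by simp
      have e2: "(yb,vb) \<in> E" using symG[OF sg e1] .
      note EF = EF e1 e2
      have ?thesis by (rule shape_W1[OF sg n11 k1 k2, where c=vb and aa=va and ab=vc and ac=x and ad=ya and ae=yb]) (use dA sA EF in auto)
    }
    moreover { assume zz: "zb = vc"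
      have e1: "(vc,yb) \<in> E" using zbE zz by simp
      have e2: "(yb,vc) \<in> E" using symG[OF sg e1] .
      note EF = EF e1 e2
      have ?thesis by (rule shape_W2[OF sg n11 k1 k2, where c=vb and aa=va and ab=x and ac=ya and ba=vc and bb=yb]) (use dA sA EF in auto)
    }
    moreover { assume zz: "zb = x"
      have e1: "(x,yb) \<in> E" using zbE zz by simp
      have e2: "(yb,x) \<in> E" using symG[OF sg e1] .
      note EF = EF e1 e2
      have ?thesis by (rule shape_W2[OF sg n11 k1 k2, where c=vb and aa=va and ab=vc and ac=ya and ba=x and bb=yb]) (use dA sA EF in auto)
    }
    moreover { assume zz: "zb = ya"
      have e1: "(ya,yb) \<in> E" using zbE zz by simp
      have e2: "(yb,ya) \<in> E" using symG[OF sg e1] .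
      note EF = EF e1 e2
      have ?thesis by (rule shape_W2[OF sg n11 k1 k2, where c=vb and aa=va and ab=vc and ac=x and ba=ya and bb=yb]) (use dA sA EF in auto)
    }
    ultimately have ?thesis by blast
  }
  moreover { assume zz: "za = vc"
    have e1: "(vc,ya) \<in> E" using zaE zz by simp
    have e2: "(ya,vc) \<in> E" using symG[OF sg e1] .
    note EF = EF e1 e2
    have False using lp[rule_format, of "[va,vb,vc,ya]"] dA sA EF by auto
    then have ?thesis ..
  }
  moreover { assume zz: "za = x"
    have e1: "(x,ya) \<in> E" using zaE zz by simp
    have e2: "(ya,x) \<in> E" using symG[OF sg e1] .
    note EF = EF e1 e2
    have False using lp[rule_format, of "[va,vb,x,ya]"] dA sA EF by auto
    then have ?thesis ..
  }
  ultimately have ?thesis by blast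
  then show ?thesis .
qed

lemma caseB_3_2:
  assumes sg: "simple_graph V E" and con: "connected_graph V E" and n11: "11 \<le> card V"
    and k1: "2 \<le> k" and k2: "k \<le> card V - 2"
    and lp: "\<forall>Q. distinct Q \<and> set Q \<subseteq> V \<and> epath E Q \<longrightarrow> length Q \<le> 3"
    and dA: "distinct [va,vb,vc,x]" and sA: "set [va,vb,vc,x] \<subseteq> V"
    and eP: "epath E [va,vb,vc]" and ex: "(vc,x) \<in> E"
  shows "\<not> kuratowski_planar (with_proj (token_graph V E k))"
proof -
  note EF = eP[simplified] ex symG[OF sg ex] epath_rev[OF sg eP, simplified]
  have False using lp[rule_format, of "[va,vb,vc,x]"] dA sA EF by auto
  then have ?thesis ..
  then show ?thesis .
qed

lemma caseB_4_0:
  assumes sg: "simple_graph V E" and con: "connected_graph V E" and n11: "11 \<le> card V"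
    and k1: "2 \<le> k" and k2: "k \<le> card V - 2"
    and lp: "\<forall>Q. distinct Q \<and> set Q \<subseteq> V \<and> epath E Q \<longrightarrow> length Q \<le> 4"
    and dA: "distinct [va,vb,vc,vd,x]" and sA: "set [va,vb,vc,vd,x] \<subseteq> V"
    and eP: "epath E [va,vb,vc,vd]" and ex: "(va,x) \<in> E"
  shows "\<not> kuratowski_planar (with_proj (token_graph V E k))"
proof -
  note EF = eP[simplified] ex symG[OF sg ex] epath_rev[OF sg eP, simplified]
  have False using lp[rule_format, of "[vd,vc,vb,va,x]"] dA sA EF by auto
  then have ?thesis ..
  then show ?thesis .
qed

lemma caseB_4_1:
  assumes sg: "simple_graph V E" and con: "connected_graph V E" and n11: "11 \<le> card V"
    and k1: "2 \<le> k" and k2: "k \<le> card V - 2"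
    and lp: "\<forall>Q. distinct Q \<and> set Q \<subseteq> V \<and> epath E Q \<longrightarrow> length Q \<le> 4"
    and dA: "distinct [va,vb,vc,vd,x]" and sA: "set [va,vb,vc,vd,x] \<subseteq> V"
    and eP: "epath E [va,vb,vc,vd]" and ex: "(vb,x) \<in> E"
  shows "\<not> kuratowski_planar (with_proj (token_graph V E k))"
proof -
  note EF = eP[simplified] ex symG[OF sg ex] epath_rev[OF sg eP, simplified]
  have cS: "card (set [va,vb,vc,vd,x]) < card V" using n11 distinct_card[OF dA] by simp
  obtain za ya where zaS: "za \<in> set [va,vb,vc,vd,x]" and yaV: "ya \<in> V" and yan: "ya \<notin> set [va,vb,vc,vd,x]" and zaE: "(za,ya) \<in> E"
    using grow[OF sg con sA _ cS] by auto
  have dA: "distinct [va,vb,vc,vd,x,ya]" using dA yan by auto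
  have sA: "set [va,vb,vc,vd,x,ya] \<subseteq> V" using sA yaV by simp
  have "za = va \<or> za = vb \<or> za = vc \<or> za = vd \<or> za = x" using zaS by simp
  moreover { assume zz: "za = va"
    have e1: "(va,ya) \<in> E" using zaE zz by simp
    have e2: "(ya,va) \<in> E" using symG[OF sg e1] .
    note EF = EF e1 e2
    have False using lp[rule_format, of "[vd,vc,vb,va,ya]"] dA sA EF by auto
    then have ?thesis ..
  }
  moreover { assume zz: "za = vb"
    have e1: "(vb,ya) \<in> E" using zaE zz by simp
    have e2: "(ya,vb) \<in> E" using symG[OF sg e1] .
    note EF = EF e1 e2
    have ?thesis by (rule shape_W2[OF sg n11 k1 k2, where c=vb and aa=va and ab=x and ac=ya and ba=vc and bb=vd]) (use dA sA EF in auto)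
  }
  moreover { assume zz: "za = vc"
    have e1: "(vc,ya) \<in> E" using zaE zz by simp
    have e2: "(ya,vc) \<in> E" using symG[OF sg e1] .
    note EF = EF e1 e2
    have ?thesis by (rule shape_W3[OF sg n11 k1 k2, where c=vb and d=vc and aa=va and ab=x and ba=vd and bb=ya]) (use dA sA EF in auto)
  }
  moreover { assume zz: "za = vd"
    have e1: "(vd,ya) \<in> E" using zaE zz by simp
    have e2: "(ya,vd) \<in> E" using symG[OF sg e1] .
    note EF = EF e1 e2
    have False using lp[rule_format, of "[va,vb,vc,vd,ya]"] dA sA EF by auto
    then have ?thesis ..
  }
  moreover { assume zz: "za = x"
    have e1: "(x,ya) \<in> E" using zaE zz by simp
    have e2: "(ya,x) \<in> E" using symG[OF sg e1] .
    note EF = EF e1 e2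
    have False using lp[rule_format, of "[vd,vc,vb,x,ya]"] dA sA EF by auto
    then have ?thesis ..
  }
  ultimately have ?thesis by blast
  then show ?thesis .
qed

lemma caseB_4_2:
  assumes sg: "simple_graph V E" and con: "connected_graph V E" and n11: "11 \<le> card V"
    and k1: "2 \<le> k" and k2: "k \<le> card V - 2"
    and lp: "\<forall>Q. distinct Q \<and> set Q \<subseteq> V \<and> epath E Q \<longrightarrow> length Q \<le> 4"
    and dA: "distinct [va,vb,vc,vd,x]" and sA: "set [va,vb,vc,vd,x] \<subseteq> V"
    and eP: "epath E [va,vb,vc,vd]" and ex: "(vc,x) \<in> E"
  shows "\<not> kuratowski_planar (with_proj (token_graph V E k))"
proof -
  note EF = eP[simplified] ex symG[OF sg ex] epath_rev[OF sg eP, simplified]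
  have cS: "card (set [va,vb,vc,vd,x]) < card V" using n11 distinct_card[OF dA] by simp
  obtain za ya where zaS: "za \<in> set [va,vb,vc,vd,x]" and yaV: "ya \<in> V" and yan: "ya \<notin> set [va,vb,vc,vd,x]" and zaE: "(za,ya) \<in> E"
    using grow[OF sg con sA _ cS] by auto
  have dA: "distinct [va,vb,vc,vd,x,ya]" using dA yan by auto
  have sA: "set [va,vb,vc,vd,x,ya] \<subseteq> V" using sA yaV by simp
  have "za = va \<or> za = vb \<or> za = vc \<or> za = vd \<or> za = x" using zaS by simp
  moreover { assume zz: "za = va"
    have e1: "(va,ya) \<in> E" using zaE zz by simp
    have e2: "(ya,va) \<in> E" using symG[OF sg e1] .
    note EF = EF e1 e2
    have False using lp[rule_format, of "[vd,vc,vb,va,ya]"] dA sA EF by auto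
    then have ?thesis ..
  }
  moreover { assume zz: "za = vb"
    have e1: "(vb,ya) \<in> E" using zaE zz by simp
    have e2: "(ya,vb) \<in> E" using symG[OF sg e1] .
    note EF = EF e1 e2
    have ?thesis by (rule shape_W3[OF sg n11 k1 k2, where c=vb and d=vc and aa=va and ab=ya and ba=vd and bb=x]) (use dA sA EF in auto)
  }
  moreover { assume zz: "za = vc"
    have e1: "(vc,ya) \<in> E" using zaE zz by simp
    have e2: "(ya,vc) \<in> E" using symG[OF sg e1] .
    note EF = EF e1 e2
    have ?thesis by (rule shape_W2[OF sg n11 k1 k2, where c=vc and aa=vd and ab=x and ac=ya and ba=vb and bb=va]) (use dA sA EF in auto)
  }
  moreover { assume zz: "za = vd"
    have e1: "(vd,ya) \<in> E" using zaE zz by simp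
    have e2: "(ya,vd) \<in> E" using symG[OF sg e1] .
    note EF = EF e1 e2
    have False using lp[rule_format, of "[va,vb,vc,vd,ya]"] dA sA EF by auto
    then have ?thesis ..
  }
  moreover { assume zz: "za = x"
    have e1: "(x,ya) \<in> E" using zaE zz by simp
    have e2: "(ya,x) \<in> E" using symG[OF sg e1] .
    note EF = EF e1 e2
    have False using lp[rule_format, of "[va,vb,vc,x,ya]"] dA sA EF by auto
    then have ?thesis ..
  }
  ultimately have ?thesis by blast
  then show ?thesis .
qed

lemma caseB_4_3:
  assumes sg: "simple_graph V E" and con: "connected_graph V E" and n11: "11 \<le> card V"
    and k1: "2 \<le> k" and k2: "k \<le> card V - 2"
    and lp: "\<forall>Q. distinct Q \<and> set Q \<subseteq> V \<and> epath E Q \<longrightarrow> length Q \<le> 4"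
    and dA: "distinct [va,vb,vc,vd,x]" and sA: "set [va,vb,vc,vd,x] \<subseteq> V"
    and eP: "epath E [va,vb,vc,vd]" and ex: "(vd,x) \<in> E"
  shows "\<not> kuratowski_planar (with_proj (token_graph V E k))"
proof -
  note EF = eP[simplified] ex symG[OF sg ex] epath_rev[OF sg eP, simplified]
  have False using lp[rule_format, of "[va,vb,vc,vd,x]"] dA sA EF by auto
  then have ?thesis ..
  then show ?thesis .
qed

lemma caseB_5_1:
  assumes sg: "simple_graph V E" and con: "connected_graph V E" and n11: "11 \<le> card V"
    and k1: "2 \<le> k" and k2: "k \<le> card V - 2"
    and lp: "\<forall>Q. distinct Q \<and> set Q \<subseteq> V \<and> epath E Q \<longrightarrow> length Q \<le> 5"
    and dA: "distinct [va,vb,vc,vd,ve,x]" and sA: "set [va,vb,vc,vd,ve,x] \<subseteq> V"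
    and eP: "epath E [va,vb,vc,vd,ve]" and ex: "(vb,x) \<in> E"
  shows "\<not> kuratowski_planar (with_proj (token_graph V E k))"
proof -
  note EF = eP[simplified] ex symG[OF sg ex] epath_rev[OF sg eP, simplified]
  have cS: "card (set [va,vb,vc,vd,ve,x]) < card V" using n11 distinct_card[OF dA] by simp
  obtain za ya where zaS: "za \<in> set [va,vb,vc,vd,ve,x]" and yaV: "ya \<in> V" and yan: "ya \<notin> set [va,vb,vc,vd,ve,x]" and zaE: "(za,ya) \<in> E"
    using grow[OF sg con sA _ cS] by auto
  have dA: "distinct [va,vb,vc,vd,ve,x,ya]" using dA yan by auto
  have sA: "set [va,vb,vc,vd,ve,x,ya] \<subseteq> V" using sA yaV by simp
  have "za = va \<or> za = vb \<or> za = vc \<or> za = vd \<or> za = ve \<or> za = x" using zaS by simp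
  moreover { assume zz: "za = va"
    have e1: "(va,ya) \<in> E" using zaE zz by simp
    have e2: "(ya,va) \<in> E" using symG[OF sg e1] .
    note EF = EF e1 e2
    have False using lp[rule_format, of "[ve,vd,vc,vb,va,ya]"] dA sA EF by auto
    then have ?thesis ..
  }
  moreover { assume zz: "za = vb"
    have e1: "(vb,ya) \<in> E" using zaE zz by simp
    have e2: "(ya,vb) \<in> E" using symG[OF sg e1] .
    note EF = EF e1 e2
    have ?thesis by (rule shape_W2[OF sg n11 k1 k2, where c=vb and aa=va and ab=x and ac=ya and ba=vc and bb=vd]) (use dA sA EF in auto)
  }
  moreover { assume zz: "za = vc"
    have e1: "(vc,ya) \<in> E" using zaE zz by simp
    have e2: "(ya,vc) \<in> E" using symG[OF sg e1] .
    note EF = EF e1 e2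
    have ?thesis by (rule shape_W3[OF sg n11 k1 k2, where c=vb and d=vc and aa=va and ab=x and ba=vd and bb=ya]) (use dA sA EF in auto)
  }
  moreover { assume zz: "za = vd"
    have e1: "(vd,ya) \<in> E" using zaE zz by simp
    have e2: "(ya,vd) \<in> E" using symG[OF sg e1] .
    note EF = EF e1 e2
    have ?thesis by (rule shape_W4[OF sg n11 k1 k2, where c=vb and e=vc and d=vd and aa=va and ab=x and ba=ve and bb=ya]) (use dA sA EF in auto)
  }
  moreover { assume zz: "za = ve"
    have e1: "(ve,ya) \<in> E" using zaE zz by simp
    have e2: "(ya,ve) \<in> E" using symG[OF sg e1] .
    note EF = EF e1 e2
    have ?thesis by (rule shape_W6[OF sg n11 k1 k2, where c=vb and a=va and b=x and da=vc and db=vd and dc=ve and dd=ya]) (use dA sA EF in auto)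
  }
  moreover { assume zz: "za = x"
    have e1: "(x,ya) \<in> E" using zaE zz by simp
    have e2: "(ya,x) \<in> E" using symG[OF sg e1] .
    note EF = EF e1 e2
    have False using lp[rule_format, of "[ve,vd,vc,vb,x,ya]"] dA sA EF by auto
    then have ?thesis ..
  }
  ultimately have ?thesis by blast
  then show ?thesis .
qed

lemma caseB_5_2:
  assumes sg: "simple_graph V E" and con: "connected_graph V E" and n11: "11 \<le> card V"
    and k1: "2 \<le> k" and k2: "k \<le> card V - 2"
    and lp: "\<forall>Q. distinct Q \<and> set Q \<subseteq> V \<and> epath E Q \<longrightarrow> length Q \<le> 5"
    and dA: "distinct [va,vb,vc,vd,ve,x]" and sA: "set [va,vb,vc,vd,ve,x] \<subseteq> V"
    and eP: "epath E [va,vb,vc,vd,ve]" and ex: "(vc,x) \<in> E"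
  shows "\<not> kuratowski_planar (with_proj (token_graph V E k))"
proof -
  note EF = eP[simplified] ex symG[OF sg ex] epath_rev[OF sg eP, simplified]
  have cS: "card (set [va,vb,vc,vd,ve,x]) < card V" using n11 distinct_card[OF dA] by simp
  obtain za ya where zaS: "za \<in> set [va,vb,vc,vd,ve,x]" and yaV: "ya \<in> V" and yan: "ya \<notin> set [va,vb,vc,vd,ve,x]" and zaE: "(za,ya) \<in> E"
    using grow[OF sg con sA _ cS] by auto
  have dA: "distinct [va,vb,vc,vd,ve,x,ya]" using dA yan by auto
  have sA: "set [va,vb,vc,vd,ve,x,ya] \<subseteq> V" using sA yaV by simp
  have "za = va \<or> za = vb \<or> za = vc \<or> za = vd \<or> za = ve \<or> za = x" using zaS by simp
  moreover { assume zz: "za = va"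
    have e1: "(va,ya) \<in> E" using zaE zz by simp
    have e2: "(ya,va) \<in> E" using symG[OF sg e1] .
    note EF = EF e1 e2
    have False using lp[rule_format, of "[ve,vd,vc,vb,va,ya]"] dA sA EF by auto
    then have ?thesis ..
  }
  moreover { assume zz: "za = vb"
    have e1: "(vb,ya) \<in> E" using zaE zz by simp
    have e2: "(ya,vb) \<in> E" using symG[OF sg e1] .
    note EF = EF e1 e2
    have ?thesis by (rule shape_W3[OF sg n11 k1 k2, where c=vb and d=vc and aa=va and ab=ya and ba=vd and bb=x]) (use dA sA EF in auto)
  }
  moreover { assume zz: "za = vc"
    have e1: "(vc,ya) \<in> E" using zaE zz by simp
    have e2: "(ya,vc) \<in> E" using symG[OF sg e1] .
    note EF = EF e1 e2
    have ?thesis by (rule shape_W2[OF sg n11 k1 k2, where c=vc and aa=vb and ab=x and ac=ya and ba=vd and bb=ve]) (use dA sA EF in auto)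
  }
  moreover { assume zz: "za = vd"
    have e1: "(vd,ya) \<in> E" using zaE zz by simp
    have e2: "(ya,vd) \<in> E" using symG[OF sg e1] .
    note EF = EF e1 e2
    have ?thesis by (rule shape_W3[OF sg n11 k1 k2, where c=vc and d=vd and aa=vb and ab=x and ba=ve and bb=ya]) (use dA sA EF in auto)
  }
  moreover { assume zz: "za = ve"
    have e1: "(ve,ya) \<in> E" using zaE zz by simp
    have e2: "(ya,ve) \<in> E" using symG[OF sg e1] .
    note EF = EF e1 e2
    have False using lp[rule_format, of "[va,vb,vc,vd,ve,ya]"] dA sA EF by auto
    then have ?thesis ..
  }
  moreover { assume zz: "za = x"
    have e1: "(x,ya) \<in> E" using zaE zz by simp
    have e2: "(ya,x) \<in> E" using symG[OF sg e1] .
    note EF = EF e1 e2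
    have cS: "card (set [va,vb,vc,vd,ve,x,ya]) < card V" using n11 distinct_card[OF dA] by simp
    obtain zb yb where zbS: "zb \<in> set [va,vb,vc,vd,ve,x,ya]" and ybV: "yb \<in> V" and ybn: "yb \<notin> set [va,vb,vc,vd,ve,x,ya]" and zbE: "(zb,yb) \<in> E"
      using grow[OF sg con sA _ cS] by auto
    have dA: "distinct [va,vb,vc,vd,ve,x,ya,yb]" using dA ybn by auto
    have sA: "set [va,vb,vc,vd,ve,x,ya,yb] \<subseteq> V" using sA ybV by simp
    have "zb = va \<or> zb = vb \<or> zb = vc \<or> zb = vd \<or> zb = ve \<or> zb = x \<or> zb = ya" using zbS by simp
    moreover { assume zz: "zb = va"
      have e1: "(va,yb) \<in> E" using zbE zz by simp
      have e2: "(yb,va) \<in> E" using symG[OF sg e1] .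
      note EF = EF e1 e2
      have False using lp[rule_format, of "[ve,vd,vc,vb,va,yb]"] dA sA EF by auto
      then have ?thesis ..
    }
    moreover { assume zz: "zb = vb"
      have e1: "(vb,yb) \<in> E" using zbE zz by simp
      have e2: "(yb,vb) \<in> E" using symG[OF sg e1] .
      note EF = EF e1 e2
      have ?thesis by (rule shape_W3[OF sg n11 k1 k2, where c=vb and d=vc and aa=va and ab=yb and ba=vd and bb=x]) (use dA sA EF in auto)
    }
    moreover { assume zz: "zb = vc"
      have e1: "(vc,yb) \<in> E" using zbE zz by simp
      have e2: "(yb,vc) \<in> E" using symG[OF sg e1] .
      note EF = EF e1 e2
      have ?thesis by (rule shape_W2[OF sg n11 k1 k2, where c=vc and aa=vb and ab=vd and ac=yb and ba=x and bb=ya]) (use dA sA EF in auto)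
    }
    moreover { assume zz: "zb = vd"
      have e1: "(vd,yb) \<in> E" using zbE zz by simp
      have e2: "(yb,vd) \<in> E" using symG[OF sg e1] .
      note EF = EF e1 e2
      have ?thesis by (rule shape_W3[OF sg n11 k1 k2, where c=vc and d=vd and aa=vb and ab=x and ba=ve and bb=yb]) (use dA sA EF in auto)
    }
    moreover { assume zz: "zb = ve"
      have e1: "(ve,yb) \<in> E" using zbE zz by simp
      have e2: "(yb,ve) \<in> E" using symG[OF sg e1] .
      note EF = EF e1 e2
      have False using lp[rule_format, of "[va,vb,vc,vd,ve,yb]"] dA sA EF by auto
      then have ?thesis ..
    }
    moreover { assume zz: "zb = x"
      have e1: "(x,yb) \<in> E" using zbE zz by simp
      have e2: "(yb,x) \<in> E" using symG[OF sg e1] .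
      note EF = EF e1 e2
      have ?thesis by (rule shape_W3[OF sg n11 k1 k2, where c=vc and d=x and aa=vb and ab=vd and ba=ya and bb=yb]) (use dA sA EF in auto)
    }
    moreover { assume zz: "zb = ya"
      have e1: "(ya,yb) \<in> E" using zbE zz by simp
      have e2: "(yb,ya) \<in> E" using symG[OF sg e1] .
      note EF = EF e1 e2
      have False using lp[rule_format, of "[va,vb,vc,x,ya,yb]"] dA sA EF by auto
      then have ?thesis ..
    }
    ultimately have ?thesis by blast
  }
  ultimately have ?thesis by blast
  then show ?thesis .
qed

lemma caseB_5_3:
  assumes sg: "simple_graph V E" and con: "connected_graph V E" and n11: "11 \<le> card V"
    and k1: "2 \<le> k" and k2: "k \<le> card V - 2"
    and lp: "\<forall>Q. distinct Q \<and> set Q \<subseteq> V \<and> epath E Q \<longrightarrow> length Q \<le> 5"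
    and dA: "distinct [va,vb,vc,vd,ve,x]" and sA: "set [va,vb,vc,vd,ve,x] \<subseteq> V"
    and eP: "epath E [va,vb,vc,vd,ve]" and ex: "(vd,x) \<in> E"
  shows "\<not> kuratowski_planar (with_proj (token_graph V E k))"
proof -
  note EF = eP[simplified] ex symG[OF sg ex] epath_rev[OF sg eP, simplified]
  have cS: "card (set [va,vb,vc,vd,ve,x]) < card V" using n11 distinct_card[OF dA] by simp
  obtain za ya where zaS: "za \<in> set [va,vb,vc,vd,ve,x]" and yaV: "ya \<in> V" and yan: "ya \<notin> set [va,vb,vc,vd,ve,x]" and zaE: "(za,ya) \<in> E"
    using grow[OF sg con sA _ cS] by auto
  have dA: "distinct [va,vb,vc,vd,ve,x,ya]" using dA yan by auto
  have sA: "set [va,vb,vc,vd,ve,x,ya] \<subseteq> V" using sA yaV by simp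
  have "za = va \<or> za = vb \<or> za = vc \<or> za = vd \<or> za = ve \<or> za = x" using zaS by simp
  moreover { assume zz: "za = va"
    have e1: "(va,ya) \<in> E" using zaE zz by simp
    have e2: "(ya,va) \<in> E" using symG[OF sg e1] .
    note EF = EF e1 e2
    have ?thesis by (rule shape_W6[OF sg n11 k1 k2, where c=vd and a=ve and b=x and da=vc and db=vb and dc=va and dd=ya]) (use dA sA EF in auto)
  }
  moreover { assume zz: "za = vb"
    have e1: "(vb,ya) \<in> E" using zaE zz by simp
    have e2: "(ya,vb) \<in> E" using symG[OF sg e1] .
    note EF = EF e1 e2
    have ?thesis by (rule shape_W4[OF sg n11 k1 k2, where c=vb and e=vc and d=vd and aa=va and ab=ya and ba=ve and bb=x]) (use dA sA EF in auto)
  }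
  moreover { assume zz: "za = vc"
    have e1: "(vc,ya) \<in> E" using zaE zz by simp
    have e2: "(ya,vc) \<in> E" using symG[OF sg e1] .
    note EF = EF e1 e2
    have ?thesis by (rule shape_W3[OF sg n11 k1 k2, where c=vc and d=vd and aa=vb and ab=ya and ba=ve and bb=x]) (use dA sA EF in auto)
  }
  moreover { assume zz: "za = vd"
    have e1: "(vd,ya) \<in> E" using zaE zz by simp
    have e2: "(ya,vd) \<in> E" using symG[OF sg e1] .
    note EF = EF e1 e2
    have ?thesis by (rule shape_W2[OF sg n11 k1 k2, where c=vd and aa=ve and ab=x and ac=ya and ba=vc and bb=vb]) (use dA sA EF in auto)
  }
  moreover { assume zz: "za = ve"
    have e1: "(ve,ya) \<in> E" using zaE zz by simp
    have e2: "(ya,ve) \<in> E" using symG[OF sg e1] .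
    note EF = EF e1 e2
    have False using lp[rule_format, of "[va,vb,vc,vd,ve,ya]"] dA sA EF by auto
    then have ?thesis ..
  }
  moreover { assume zz: "za = x"
    have e1: "(x,ya) \<in> E" using zaE zz by simp
    have e2: "(ya,x) \<in> E" using symG[OF sg e1] .
    note EF = EF e1 e2
    have False using lp[rule_format, of "[va,vb,vc,vd,x,ya]"] dA sA EF by auto
    then have ?thesis ..
  }
  ultimately have ?thesis by blast
  then show ?thesis .
qed

lemma caseB_6_2:
  assumes sg: "simple_graph V E" and con: "connected_graph V E" and n11: "11 \<le> card V"
    and k1: "2 \<le> k" and k2: "k \<le> card V - 2"
    and lp: "\<forall>Q. distinct Q \<and> set Q \<subseteq> V \<and> epath E Q \<longrightarrow> length Q \<le> 6"
    and dA: "distinct [va,vb,vc,vd,ve,vf,x]" and sA: "set [va,vb,vc,vd,ve,vf,x] \<subseteq> V"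
    and eP: "epath E [va,vb,vc,vd,ve,vf]" and ex: "(vc,x) \<in> E"
  shows "\<not> kuratowski_planar (with_proj (token_graph V E k))"
proof -
  note EF = eP[simplified] ex symG[OF sg ex] epath_rev[OF sg eP, simplified]
  have cS: "card (set [va,vb,vc,vd,ve,vf,x]) < card V" using n11 distinct_card[OF dA] by simp
  obtain za ya where zaS: "za \<in> set [va,vb,vc,vd,ve,vf,x]" and yaV: "ya \<in> V" and yan: "ya \<notin> set [va,vb,vc,vd,ve,vf,x]" and zaE: "(za,ya) \<in> E"
    using grow[OF sg con sA _ cS] by auto
  have dA: "distinct [va,vb,vc,vd,ve,vf,x,ya]" using dA yan by auto
  have sA: "set [va,vb,vc,vd,ve,vf,x,ya] \<subseteq> V" using sA yaV by simp
  have "za = va \<or> za = vb \<or> za = vc \<or> za = vd \<or> za = ve \<or> za = vf \<or> za = x" using zaS by simp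
  moreover { assume zz: "za = va"
    have e1: "(va,ya) \<in> E" using zaE zz by simp
    have e2: "(ya,va) \<in> E" using symG[OF sg e1] .
    note EF = EF e1 e2
    have False using lp[rule_format, of "[vf,ve,vd,vc,vb,va,ya]"] dA sA EF by auto
    then have ?thesis ..
  }
  moreover { assume zz: "za = vb"
    have e1: "(vb,ya) \<in> E" using zaE zz by simp
    have e2: "(ya,vb) \<in> E" using symG[OF sg e1] .
    note EF = EF e1 e2
    have ?thesis by (rule shape_W6[OF sg n11 k1 k2, where c=vb and a=va and b=ya and da=vc and db=vd and dc=ve and dd=vf]) (use dA sA EF in auto)
  }
  moreover { assume zz: "za = vc"
    have e1: "(vc,ya) \<in> E" using zaE zz by simp
    have e2: "(ya,vc) \<in> E" using symG[OF sg e1] .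
    note EF = EF e1 e2
    have ?thesis by (rule shape_W2[OF sg n11 k1 k2, where c=vc and aa=vb and ab=x and ac=ya and ba=vd and bb=ve]) (use dA sA EF in auto)
  }
  moreover { assume zz: "za = vd"
    have e1: "(vd,ya) \<in> E" using zaE zz by simp
    have e2: "(ya,vd) \<in> E" using symG[OF sg e1] .
    note EF = EF e1 e2
    have ?thesis by (rule shape_W3[OF sg n11 k1 k2, where c=vc and d=vd and aa=vb and ab=x and ba=ve and bb=ya]) (use dA sA EF in auto)
  }
  moreover { assume zz: "za = ve"
    have e1: "(ve,ya) \<in> E" using zaE zz by simp
    have e2: "(ya,ve) \<in> E" using symG[OF sg e1] .
    note EF = EF e1 e2
    have ?thesis by (rule shape_W6[OF sg n11 k1 k2, where c=ve and a=vf and b=ya and da=vd and db=vc and dc=vb and dd=va]) (use dA sA EF in auto)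
  }
  moreover { assume zz: "za = vf"
    have e1: "(vf,ya) \<in> E" using zaE zz by simp
    have e2: "(ya,vf) \<in> E" using symG[OF sg e1] .
    note EF = EF e1 e2
    have ?thesis by (rule shape_W6[OF sg n11 k1 k2, where c=vc and a=vb and b=x and da=vd and db=ve and dc=vf and dd=ya]) (use dA sA EF in auto)
  }
  moreover { assume zz: "za = x"
    have e1: "(x,ya) \<in> E" using zaE zz by simp
    have e2: "(ya,x) \<in> E" using symG[OF sg e1] .
    note EF = EF e1 e2
    have cS: "card (set [va,vb,vc,vd,ve,vf,x,ya]) < card V" using n11 distinct_card[OF dA] by simp
    obtain zb yb where zbS: "zb \<in> set [va,vb,vc,vd,ve,vf,x,ya]" and ybV: "yb \<in> V" and ybn: "yb \<notin> set [va,vb,vc,vd,ve,vf,x,ya]" and zbE: "(zb,yb) \<in> E"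
      using grow[OF sg con sA _ cS] by auto
    have dA: "distinct [va,vb,vc,vd,ve,vf,x,ya,yb]" using dA ybn by auto
    have sA: "set [va,vb,vc,vd,ve,vf,x,ya,yb] \<subseteq> V" using sA ybV by simp
    have "zb = va \<or> zb = vb \<or> zb = vc \<or> zb = vd \<or> zb = ve \<or> zb = vf \<or> zb = x \<or> zb = ya" using zbS by simp
    moreover { assume zz: "zb = va"
      have e1: "(va,yb) \<in> E" using zbE zz by simp
      have e2: "(yb,va) \<in> E" using symG[OF sg e1] .
      note EF = EF e1 e2
      have False using lp[rule_format, of "[vf,ve,vd,vc,vb,va,yb]"] dA sA EF by auto
      then have ?thesis ..
    }
    moreover { assume zz: "zb = vb"
      have e1: "(vb,yb) \<in> E" using zbE zz by simp
      have e2: "(yb,vb) \<in> E" using symG[OF sg e1] .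
      note EF = EF e1 e2
      have ?thesis by (rule shape_W6[OF sg n11 k1 k2, where c=vb and a=va and b=yb and da=vc and db=vd and dc=ve and dd=vf]) (use dA sA EF in auto)
    }
    moreover { assume zz: "zb = vc"
      have e1: "(vc,yb) \<in> E" using zbE zz by simp
      have e2: "(yb,vc) \<in> E" using symG[OF sg e1] .
      note EF = EF e1 e2
      have ?thesis by (rule shape_W2[OF sg n11 k1 k2, where c=vc and aa=vb and ab=vd and ac=yb and ba=x and bb=ya]) (use dA sA EF in auto)
    }
    moreover { assume zz: "zb = vd"
      have e1: "(vd,yb) \<in> E" using zbE zz by simp
      have e2: "(yb,vd) \<in> E" using symG[OF sg e1] .
      note EF = EF e1 e2
      have ?thesis by (rule shape_W3[OF sg n11 k1 k2, where c=vc and d=vd and aa=vb and ab=x and ba=ve and bb=yb]) (use dA sA EF in auto)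
    }
    moreover { assume zz: "zb = ve"
      have e1: "(ve,yb) \<in> E" using zbE zz by simp
      have e2: "(yb,ve) \<in> E" using symG[OF sg e1] .
      note EF = EF e1 e2
      have ?thesis by (rule shape_W6[OF sg n11 k1 k2, where c=ve and a=vf and b=yb and da=vd and db=vc and dc=vb and dd=va]) (use dA sA EF in auto)
    }
    moreover { assume zz: "zb = vf"
      have e1: "(vf,yb) \<in> E" using zbE zz by simp
      have e2: "(yb,vf) \<in> E" using symG[OF sg e1] .
      note EF = EF e1 e2
      have ?thesis by (rule shape_W6[OF sg n11 k1 k2, where c=vc and a=vb and b=x and da=vd and db=ve and dc=vf and dd=yb]) (use dA sA EF in auto)
    }
    moreover { assume zz: "zb = x"
      have e1: "(x,yb) \<in> E" using zbE zz by simp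
      have e2: "(yb,x) \<in> E" using symG[OF sg e1] .
      note EF = EF e1 e2
      have ?thesis by (rule shape_W6[OF sg n11 k1 k2, where c=x and a=ya and b=yb and da=vc and db=vd and dc=ve and dd=vf]) (use dA sA EF in auto)
    }
    moreover { assume zz: "zb = ya"
      have e1: "(ya,yb) \<in> E" using zbE zz by simp
      have e2: "(yb,ya) \<in> E" using symG[OF sg e1] .
      note EF = EF e1 e2
      have False using lp[rule_format, of "[vf,ve,vd,vc,x,ya,yb]"] dA sA EF by auto
      then have ?thesis ..
    }
    ultimately have ?thesis by blast
  }
  ultimately have ?thesis by blast
  then show ?thesis .
qed

lemma caseB_6_3:
  assumes sg: "simple_graph V E" and con: "connected_graph V E" and n11: "11 \<le> card V"
    and k1: "2 \<le> k" and k2: "k \<le> card V - 2"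
    and lp: "\<forall>Q. distinct Q \<and> set Q \<subseteq> V \<and> epath E Q \<longrightarrow> length Q \<le> 6"
    and dA: "distinct [va,vb,vc,vd,ve,vf,x]" and sA: "set [va,vb,vc,vd,ve,vf,x] \<subseteq> V"
    and eP: "epath E [va,vb,vc,vd,ve,vf]" and ex: "(vd,x) \<in> E"
  shows "\<not> kuratowski_planar (with_proj (token_graph V E k))"
proof -
  note EF = eP[simplified] ex symG[OF sg ex] epath_rev[OF sg eP, simplified]
  have cS: "card (set [va,vb,vc,vd,ve,vf,x]) < card V" using n11 distinct_card[OF dA] by simp
  obtain za ya where zaS: "za \<in> set [va,vb,vc,vd,ve,vf,x]" and yaV: "ya \<in> V" and yan: "ya \<notin> set [va,vb,vc,vd,ve,vf,x]" and zaE: "(za,ya) \<in> E"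
    using grow[OF sg con sA _ cS] by auto
  have dA: "distinct [va,vb,vc,vd,ve,vf,x,ya]" using dA yan by auto
  have sA: "set [va,vb,vc,vd,ve,vf,x,ya] \<subseteq> V" using sA yaV by simp
  have "za = va \<or> za = vb \<or> za = vc \<or> za = vd \<or> za = ve \<or> za = vf \<or> za = x" using zaS by simp
  moreover { assume zz: "za = va"
    have e1: "(va,ya) \<in> E" using zaE zz by simp
    have e2: "(ya,va) \<in> E" using symG[OF sg e1] .
    note EF = EF e1 e2
    have ?thesis by (rule shape_W6[OF sg n11 k1 k2, where c=vd and a=ve and b=x and da=vc and db=vb and dc=va and dd=ya]) (use dA sA EF in auto)
  }
  moreover { assume zz: "za = vb"
    have e1: "(vb,ya) \<in> E" using zaE zz by simp
    have e2: "(ya,vb) \<in> E" using symG[OF sg e1] .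
    note EF = EF e1 e2
    have ?thesis by (rule shape_W6[OF sg n11 k1 k2, where c=vb and a=va and b=ya and da=vc and db=vd and dc=ve and dd=vf]) (use dA sA EF in auto)
  }
  moreover { assume zz: "za = vc"
    have e1: "(vc,ya) \<in> E" using zaE zz by simp
    have e2: "(ya,vc) \<in> E" using symG[OF sg e1] .
    note EF = EF e1 e2
    have ?thesis by (rule shape_W3[OF sg n11 k1 k2, where c=vc and d=vd and aa=vb and ab=ya and ba=ve and bb=x]) (use dA sA EF in auto)
  }
  moreover { assume zz: "za = vd"
    have e1: "(vd,ya) \<in> E" using zaE zz by simp
    have e2: "(ya,vd) \<in> E" using symG[OF sg e1] .
    note EF = EF e1 e2
    have ?thesis by (rule shape_W2[OF sg n11 k1 k2, where c=vd and aa=vc and ab=x and ac=ya and ba=ve and bb=vf]) (use dA sA EF in auto)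
  }
  moreover { assume zz: "za = ve"
    have e1: "(ve,ya) \<in> E" using zaE zz by simp
    have e2: "(ya,ve) \<in> E" using symG[OF sg e1] .
    note EF = EF e1 e2
    have ?thesis by (rule shape_W6[OF sg n11 k1 k2, where c=ve and a=vf and b=ya and da=vd and db=vc and dc=vb and dd=va]) (use dA sA EF in auto)
  }
  moreover { assume zz: "za = vf"
    have e1: "(vf,ya) \<in> E" using zaE zz by simp
    have e2: "(ya,vf) \<in> E" using symG[OF sg e1] .
    note EF = EF e1 e2
    have False using lp[rule_format, of "[va,vb,vc,vd,ve,vf,ya]"] dA sA EF by auto
    then have ?thesis ..
  }
  moreover { assume zz: "za = x"
    have e1: "(x,ya) \<in> E" using zaE zz by simp
    have e2: "(ya,x) \<in> E" using symG[OF sg e1] .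
    note EF = EF e1 e2
    have cS: "card (set [va,vb,vc,vd,ve,vf,x,ya]) < card V" using n11 distinct_card[OF dA] by simp
    obtain zb yb where zbS: "zb \<in> set [va,vb,vc,vd,ve,vf,x,ya]" and ybV: "yb \<in> V" and ybn: "yb \<notin> set [va,vb,vc,vd,ve,vf,x,ya]" and zbE: "(zb,yb) \<in> E"
      using grow[OF sg con sA _ cS] by auto
    have dA: "distinct [va,vb,vc,vd,ve,vf,x,ya,yb]" using dA ybn by auto
    have sA: "set [va,vb,vc,vd,ve,vf,x,ya,yb] \<subseteq> V" using sA ybV by simp
    have "zb = va \<or> zb = vb \<or> zb = vc \<or> zb = vd \<or> zb = ve \<or> zb = vf \<or> zb = x \<or> zb = ya" using zbS by simp
    moreover { assume zz: "zb = va"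
      have e1: "(va,yb) \<in> E" using zbE zz by simp
      have e2: "(yb,va) \<in> E" using symG[OF sg e1] .
      note EF = EF e1 e2
      have ?thesis by (rule shape_W6[OF sg n11 k1 k2, where c=vd and a=ve and b=x and da=vc and db=vb and dc=va and dd=yb]) (use dA sA EF in auto)
    }
    moreover { assume zz: "zb = vb"
      have e1: "(vb,yb) \<in> E" using zbE zz by simp
      have e2: "(yb,vb) \<in> E" using symG[OF sg e1] .
      note EF = EF e1 e2
      have ?thesis by (rule shape_W6[OF sg n11 k1 k2, where c=vb and a=va and b=yb and da=vc and db=vd and dc=ve and dd=vf]) (use dA sA EF in auto)
    }
    moreover { assume zz: "zb = vc"
      have e1: "(vc,yb) \<in> E" using zbE zz by simp
      have e2: "(yb,vc) \<in> E" using symG[OF sg e1] .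
      note EF = EF e1 e2
      have ?thesis by (rule shape_W3[OF sg n11 k1 k2, where c=vc and d=vd and aa=vb and ab=yb and ba=ve and bb=x]) (use dA sA EF in auto)
    }
    moreover { assume zz: "zb = vd"
      have e1: "(vd,yb) \<in> E" using zbE zz by simp
      have e2: "(yb,vd) \<in> E" using symG[OF sg e1] .
      note EF = EF e1 e2
      have ?thesis by (rule shape_W2[OF sg n11 k1 k2, where c=vd and aa=vc and ab=ve and ac=yb and ba=x and bb=ya]) (use dA sA EF in auto)
    }
    moreover { assume zz: "zb = ve"
      have e1: "(ve,yb) \<in> E" using zbE zz by simp
      have e2: "(yb,ve) \<in> E" using symG[OF sg e1] .
      note EF = EF e1 e2
      have ?thesis by (rule shape_W6[OF sg n11 k1 k2, where c=ve and a=vf and b=yb and da=vd and db=vc and dc=vb and dd=va]) (use dA sA EF in auto)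
    }
    moreover { assume zz: "zb = vf"
      have e1: "(vf,yb) \<in> E" using zbE zz by simp
      have e2: "(yb,vf) \<in> E" using symG[OF sg e1] .
      note EF = EF e1 e2
      have False using lp[rule_format, of "[va,vb,vc,vd,ve,vf,yb]"] dA sA EF by auto
      then have ?thesis ..
    }
    moreover { assume zz: "zb = x"
      have e1: "(x,yb) \<in> E" using zbE zz by simp
      have e2: "(yb,x) \<in> E" using symG[OF sg e1] .
      note EF = EF e1 e2
      have ?thesis by (rule shape_W6[OF sg n11 k1 k2, where c=x and a=ya and b=yb and da=vd and db=vc and dc=vb and dd=va]) (use dA sA EF in auto)
    }
    moreover { assume zz: "zb = ya"
      have e1: "(ya,yb) \<in> E" using zbE zz by simp
      have e2: "(yb,ya) \<in> E" using symG[OF sg e1] .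
      note EF = EF e1 e2
      have False using lp[rule_format, of "[va,vb,vc,vd,x,ya,yb]"] dA sA EF by auto
      then have ?thesis ..
    }
    ultimately have ?thesis by blast
  }
  ultimately have ?thesis by blast
  then show ?thesis .
qed

lemma caseB_7_3:
  assumes sg: "simple_graph V E" and con: "connected_graph V E" and n11: "11 \<le> card V"
    and k1: "2 \<le> k" and k2: "k \<le> card V - 2"
    and lp: "\<forall>Q. distinct Q \<and> set Q \<subseteq> V \<and> epath E Q \<longrightarrow> length Q \<le> 7"
    and dA: "distinct [va,vb,vc,vd,ve,vf,vg,x]" and sA: "set [va,vb,vc,vd,ve,vf,vg,x] \<subseteq> V"
    and eP: "epath E [va,vb,vc,vd,ve,vf,vg]" and ex: "(vd,x) \<in> E"
  shows "\<not> kuratowski_planar (with_proj (token_graph V E k))"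
proof -
  note EF = eP[simplified] ex symG[OF sg ex] epath_rev[OF sg eP, simplified]
  have cS: "card (set [va,vb,vc,vd,ve,vf,vg,x]) < card V" using n11 distinct_card[OF dA] by simp
  obtain za ya where zaS: "za \<in> set [va,vb,vc,vd,ve,vf,vg,x]" and yaV: "ya \<in> V" and yan: "ya \<notin> set [va,vb,vc,vd,ve,vf,vg,x]" and zaE: "(za,ya) \<in> E"
    using grow[OF sg con sA _ cS] by auto
  have dA: "distinct [va,vb,vc,vd,ve,vf,vg,x,ya]" using dA yan by auto
  have sA: "set [va,vb,vc,vd,ve,vf,vg,x,ya] \<subseteq> V" using sA yaV by simp
  have "za = va \<or> za = vb \<or> za = vc \<or> za = vd \<or> za = ve \<or> za = vf \<or> za = vg \<or> za = x" using zaS by simp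
  moreover { assume zz: "za = va"
    have e1: "(va,ya) \<in> E" using zaE zz by simp
    have e2: "(ya,va) \<in> E" using symG[OF sg e1] .
    note EF = EF e1 e2
    have ?thesis by (rule shape_W6[OF sg n11 k1 k2, where c=vd and a=ve and b=x and da=vc and db=vb and dc=va and dd=ya]) (use dA sA EF in auto)
  }
  moreover { assume zz: "za = vb"
    have e1: "(vb,ya) \<in> E" using zaE zz by simp
    have e2: "(ya,vb) \<in> E" using symG[OF sg e1] .
    note EF = EF e1 e2
    have ?thesis by (rule shape_W6[OF sg n11 k1 k2, where c=vb and a=va and b=ya and da=vc and db=vd and dc=ve and dd=vf]) (use dA sA EF in auto)
  }
  moreover { assume zz: "za = vc"
    have e1: "(vc,ya) \<in> E" using zaE zz by simp
    have e2: "(ya,vc) \<in> E" using symG[OF sg e1] .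
    note EF = EF e1 e2
    have ?thesis by (rule shape_W6[OF sg n11 k1 k2, where c=vc and a=vb and b=ya and da=vd and db=ve and dc=vf and dd=vg]) (use dA sA EF in auto)
  }
  moreover { assume zz: "za = vd"
    have e1: "(vd,ya) \<in> E" using zaE zz by simp
    have e2: "(ya,vd) \<in> E" using symG[OF sg e1] .
    note EF = EF e1 e2
    have ?thesis by (rule shape_W2[OF sg n11 k1 k2, where c=vd and aa=vc and ab=x and ac=ya and ba=ve and bb=vf]) (use dA sA EF in auto)
  }
  moreover { assume zz: "za = ve"
    have e1: "(ve,ya) \<in> E" using zaE zz by simp
    have e2: "(ya,ve) \<in> E" using symG[OF sg e1] .
    note EF = EF e1 e2
    have ?thesis by (rule shape_W6[OF sg n11 k1 k2, where c=ve and a=vf and b=ya and da=vd and db=vc and dc=vb and dd=va]) (use dA sA EF in auto)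
  }
  moreover { assume zz: "za = vf"
    have e1: "(vf,ya) \<in> E" using zaE zz by simp
    have e2: "(ya,vf) \<in> E" using symG[OF sg e1] .
    note EF = EF e1 e2
    have ?thesis by (rule shape_W6[OF sg n11 k1 k2, where c=vf and a=vg and b=ya and da=ve and db=vd and dc=vc and dd=vb]) (use dA sA EF in auto)
  }
  moreover { assume zz: "za = vg"
    have e1: "(vg,ya) \<in> E" using zaE zz by simp
    have e2: "(ya,vg) \<in> E" using symG[OF sg e1] .
    note EF = EF e1 e2
    have ?thesis by (rule shape_W6[OF sg n11 k1 k2, where c=vd and a=vc and b=x and da=ve and db=vf and dc=vg and dd=ya]) (use dA sA EF in auto)
  }
  moreover { assume zz: "za = x"
    have e1: "(x,ya) \<in> E" using zaE zz by simp
    have e2: "(ya,x) \<in> E" using symG[OF sg e1] .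
    note EF = EF e1 e2
    have cS: "card (set [va,vb,vc,vd,ve,vf,vg,x,ya]) < card V" using n11 distinct_card[OF dA] by simp
    obtain zb yb where zbS: "zb \<in> set [va,vb,vc,vd,ve,vf,vg,x,ya]" and ybV: "yb \<in> V" and ybn: "yb \<notin> set [va,vb,vc,vd,ve,vf,vg,x,ya]" and zbE: "(zb,yb) \<in> E"
      using grow[OF sg con sA _ cS] by auto
    have dA: "distinct [va,vb,vc,vd,ve,vf,vg,x,ya,yb]" using dA ybn by auto
    have sA: "set [va,vb,vc,vd,ve,vf,vg,x,ya,yb] \<subseteq> V" using sA ybV by simp
    have "zb = va \<or> zb = vb \<or> zb = vc \<or> zb = vd \<or> zb = ve \<or> zb = vf \<or> zb = vg \<or> zb = x \<or> zb = ya" using zbS by simp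
    moreover { assume zz: "zb = va"
      have e1: "(va,yb) \<in> E" using zbE zz by simp
      have e2: "(yb,va) \<in> E" using symG[OF sg e1] .
      note EF = EF e1 e2
      have ?thesis by (rule shape_W6[OF sg n11 k1 k2, where c=vd and a=ve and b=x and da=vc and db=vb and dc=va and dd=yb]) (use dA sA EF in auto)
    }
    moreover { assume zz: "zb = vb"
      have e1: "(vb,yb) \<in> E" using zbE zz by simp
      have e2: "(yb,vb) \<in> E" using symG[OF sg e1] .
      note EF = EF e1 e2
      have ?thesis by (rule shape_W6[OF sg n11 k1 k2, where c=vb and a=va and b=yb and da=vc and db=vd and dc=ve and dd=vf]) (use dA sA EF in auto)
    }
    moreover { assume zz: "zb = vc"
      have e1: "(vc,yb) \<in> E" using zbE zz by simp
      have e2: "(yb,vc) \<in> E" using symG[OF sg e1] .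
      note EF = EF e1 e2
      have ?thesis by (rule shape_W6[OF sg n11 k1 k2, where c=vc and a=vb and b=yb and da=vd and db=ve and dc=vf and dd=vg]) (use dA sA EF in auto)
    }
    moreover { assume zz: "zb = vd"
      have e1: "(vd,yb) \<in> E" using zbE zz by simp
      have e2: "(yb,vd) \<in> E" using symG[OF sg e1] .
      note EF = EF e1 e2
      have ?thesis by (rule shape_W2[OF sg n11 k1 k2, where c=vd and aa=vc and ab=ve and ac=yb and ba=x and bb=ya]) (use dA sA EF in auto)
    }
    moreover { assume zz: "zb = ve"
      have e1: "(ve,yb) \<in> E" using zbE zz by simp
      have e2: "(yb,ve) \<in> E" using symG[OF sg e1] .
      note EF = EF e1 e2
      have ?thesis by (rule shape_W6[OF sg n11 k1 k2, where c=ve and a=vf and b=yb and da=vd and db=vc and dc=vb and dd=va]) (use dA sA EF in auto)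
    }
    moreover { assume zz: "zb = vf"
      have e1: "(vf,yb) \<in> E" using zbE zz by simp
      have e2: "(yb,vf) \<in> E" using symG[OF sg e1] .
      note EF = EF e1 e2
      have ?thesis by (rule shape_W6[OF sg n11 k1 k2, where c=vf and a=vg and b=yb and da=ve and db=vd and dc=vc and dd=vb]) (use dA sA EF in auto)
    }
    moreover { assume zz: "zb = vg"
      have e1: "(vg,yb) \<in> E" using zbE zz by simp
      have e2: "(yb,vg) \<in> E" using symG[OF sg e1] .
      note EF = EF e1 e2
      have ?thesis by (rule shape_W6[OF sg n11 k1 k2, where c=vd and a=vc and b=x and da=ve and db=vf and dc=vg and dd=yb]) (use dA sA EF in auto)
    }
    moreover { assume zz: "zb = x"
      have e1: "(x,yb) \<in> E" using zbE zz by simp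
      have e2: "(yb,x) \<in> E" using symG[OF sg e1] .
      note EF = EF e1 e2
      have ?thesis by (rule shape_W6[OF sg n11 k1 k2, where c=x and a=ya and b=yb and da=vd and db=vc and dc=vb and dd=va]) (use dA sA EF in auto)
    }
    moreover { assume zz: "zb = ya"
      have e1: "(ya,yb) \<in> E" using zbE zz by simp
      have e2: "(yb,ya) \<in> E" using symG[OF sg e1] .
      note EF = EF e1 e2
      have cS: "card (set [va,vb,vc,vd,ve,vf,vg,x,ya,yb]) < card V" using n11 distinct_card[OF dA] by simp
      obtain zc yc where zcS: "zc \<in> set [va,vb,vc,vd,ve,vf,vg,x,ya,yb]" and ycV: "yc \<in> V" and ycn: "yc \<notin> set [va,vb,vc,vd,ve,vf,vg,x,ya,yb]" and zcE: "(zc,yc) \<in> E"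
        using grow[OF sg con sA _ cS] by auto
      have dA: "distinct [va,vb,vc,vd,ve,vf,vg,x,ya,yb,yc]" using dA ycn by auto
      have sA: "set [va,vb,vc,vd,ve,vf,vg,x,ya,yb,yc] \<subseteq> V" using sA ycV by simp
      have "zc = va \<or> zc = vb \<or> zc = vc \<or> zc = vd \<or> zc = ve \<or> zc = vf \<or> zc = vg \<or> zc = x \<or> zc = ya \<or> zc = yb" using zcS by simp
      moreover { assume zz: "zc = va"
        have e1: "(va,yc) \<in> E" using zcE zz by simp
        have e2: "(yc,va) \<in> E" using symG[OF sg e1] .
        note EF = EF e1 e2
        have ?thesis by (rule shape_W6[OF sg n11 k1 k2, where c=vd and a=ve and b=x and da=vc and db=vb and dc=va and dd=yc]) (use dA sA EF in auto)
      }
      moreover { assume zz: "zc = vb"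
        have e1: "(vb,yc) \<in> E" using zcE zz by simp
        have e2: "(yc,vb) \<in> E" using symG[OF sg e1] .
        note EF = EF e1 e2
        have ?thesis by (rule shape_W6[OF sg n11 k1 k2, where c=vb and a=va and b=yc and da=vc and db=vd and dc=ve and dd=vf]) (use dA sA EF in auto)
      }
      moreover { assume zz: "zc = vc"
        have e1: "(vc,yc) \<in> E" using zcE zz by simp
        have e2: "(yc,vc) \<in> E" using symG[OF sg e1] .
        note EF = EF e1 e2
        have ?thesis by (rule shape_W6[OF sg n11 k1 k2, where c=vc and a=vb and b=yc and da=vd and db=ve and dc=vf and dd=vg]) (use dA sA EF in auto)
      }
      moreover { assume zz: "zc = vd"
        have e1: "(vd,yc) \<in> E" using zcE zz by simp
        have e2: "(yc,vd) \<in> E" using symG[OF sg e1] .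
        note EF = EF e1 e2
        have ?thesis by (rule shape_W2[OF sg n11 k1 k2, where c=vd and aa=vc and ab=ve and ac=yc and ba=x and bb=ya]) (use dA sA EF in auto)
      }
      moreover { assume zz: "zc = ve"
        have e1: "(ve,yc) \<in> E" using zcE zz by simp
        have e2: "(yc,ve) \<in> E" using symG[OF sg e1] .
        note EF = EF e1 e2
        have ?thesis by (rule shape_W6[OF sg n11 k1 k2, where c=ve and a=vf and b=yc and da=vd and db=vc and dc=vb and dd=va]) (use dA sA EF in auto)
      }
      moreover { assume zz: "zc = vf"
        have e1: "(vf,yc) \<in> E" using zcE zz by simp
        have e2: "(yc,vf) \<in> E" using symG[OF sg e1] .
        note EF = EF e1 e2
        have ?thesis by (rule shape_W6[OF sg n11 k1 k2, where c=vf and a=vg and b=yc and da=ve and db=vd and dc=vc and dd=vb]) (use dA sA EF in auto)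
      }
      moreover { assume zz: "zc = vg"
        have e1: "(vg,yc) \<in> E" using zcE zz by simp
        have e2: "(yc,vg) \<in> E" using symG[OF sg e1] .
        note EF = EF e1 e2
        have ?thesis by (rule shape_W6[OF sg n11 k1 k2, where c=vd and a=vc and b=x and da=ve and db=vf and dc=vg and dd=yc]) (use dA sA EF in auto)
      }
      moreover { assume zz: "zc = x"
        have e1: "(x,yc) \<in> E" using zcE zz by simp
        have e2: "(yc,x) \<in> E" using symG[OF sg e1] .
        note EF = EF e1 e2
        have ?thesis by (rule shape_W6[OF sg n11 k1 k2, where c=x and a=ya and b=yc and da=vd and db=vc and dc=vb and dd=va]) (use dA sA EF in auto)
      }
      moreover { assume zz: "zc = ya"
        have e1: "(ya,yc) \<in> E" using zcE zz by simp
        have e2: "(yc,ya) \<in> E" using symG[OF sg e1] .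
        note EF = EF e1 e2
        have ?thesis by (rule shape_W6[OF sg n11 k1 k2, where c=ya and a=yb and b=yc and da=x and db=vd and dc=vc and dd=vb]) (use dA sA EF in auto)
      }
      moreover { assume zz: "zc = yb"
        have e1: "(yb,yc) \<in> E" using zcE zz by simp
        have e2: "(yc,yb) \<in> E" using symG[OF sg e1] .
        note EF = EF e1 e2
        have ?thesis by (rule shape_W6[OF sg n11 k1 k2, where c=vd and a=vc and b=ve and da=x and db=ya and dc=yb and dd=yc]) (use dA sA EF in auto)
      }
      ultimately have ?thesis by blast
    }
    ultimately have ?thesis by blast
  }
  ultimately have ?thesis by blast
  then show ?thesis .
qed

lemma epath_nth: "epath E xs \<Longrightarrow> Suc i < length xs \<Longrightarrow> (xs ! i, xs ! Suc i) \<in> E"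
proof (induction E xs arbitrary: i rule: epath.induct)
  case (1 E a b r)
  then show ?case by (cases i) auto
qed auto

lemma chord_cycle:
  assumes sg: "simple_graph V E" and d: "distinct P" and s: "set P \<subseteq> V" and e: "epath E P"
    and ab: "a + 2 \<le> b" "b < length P" and ch: "(P ! a, P ! b) \<in> E"
  shows "has_cycle V E"
proof -
  define n where "n = b - a + 1"
  define cyc where "cyc = map (\<lambda>t. P ! (a + t)) [0..<n]"
  have len: "length cyc = n" "3 \<le> n" using ab unfolding cyc_def n_def by auto
  have "distinct cyc" unfolding cyc_def distinct_map
  proof
    show "inj_on (\<lambda>t. P ! (a + t)) (set [0..<n])"
      using d ab unfolding n_def by (auto intro!: inj_onI simp: nth_eq_iff_index_eq)
  qed simp
  moreover have "set cyc \<subseteq> V" using s ab unfolding cyc_def n_def by (auto intro!: nth_mem[THEN subsetD[OF s]])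
  moreover have "\<forall>i < length cyc. (cyc ! i, cyc ! ((i + 1) mod length cyc)) \<in> E"
  proof (intro allI impI)
    fix i assume i: "i < length cyc"
    show "(cyc ! i, cyc ! ((i + 1) mod length cyc)) \<in> E"
    proof (cases "i + 1 < n")
      case True
      then have "(i + 1) mod length cyc = Suc i" using len by simp
      moreover have "(P ! (a + i), P ! Suc (a + i)) \<in> E" using epath_nth[OF e, of "a + i"] True ab unfolding n_def by auto
      ultimately show ?thesis using True i len unfolding cyc_def by simp
    next
      case False
      then have "i = n - 1" using i len by simp
      then have "(i + 1) mod length cyc = 0" "a + i = b" using len ab unfolding n_def by auto
      then show ?thesis using symG[OF sg ch] i len unfolding cyc_def by simp
    qed
  qed
  ultimately show ?thesis unfolding has_cycle_def using len by blast
qed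

lemma ham_iso:
  assumes sg: "simple_graph V E" and nc: "\<not> has_cycle V E" and d: "distinct P" and s: "set P = V"
    and e: "epath E P"
  shows "iso_to_path V E"
proof -
  have bij: "bij_betw ((!) P) {0..<length P} V" using bij_betw_nth[OF d _ s[symmetric]] by (simp add: lessThan_atLeast0)
  define f where "f = the_inv_into {0..<length P} ((!) P)"
  have bf: "bij_betw f V {0..<card V}" unfolding f_def using bij_betw_the_inv_into[OF bij] distinct_card[OF d] s by simp
  have inj: "inj_on ((!) P) {0..<length P}" using bij by (simp add: bij_betw_def)
  have fP: "f (P ! a) = a" if "a < length P" for a unfolding f_def using the_inv_into_f_f[OF inj] that by simp
  have irr: "(u,u) \<notin> E" for u using sg by (simp add: simple_graph_def)
  have key: "(P ! a, P ! b) \<in> E \<longleftrightarrow> (a = b + 1 \<or> b = a + 1)" if ab: "a < length P" "b < length P" for a b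
  proof
    assume E: "(P ! a, P ! b) \<in> E"
    show "a = b + 1 \<or> b = a + 1"
    proof (rule ccontr)
      assume nadj: "\<not> (a = b + 1 \<or> b = a + 1)"
      have "a \<noteq> b" using E irr by auto
      then consider "a + 2 \<le> b" | "b + 2 \<le> a" using nadj by linarith
      then show False
      proof cases
        case 1 then show False using chord_cycle[OF sg d _ e 1 ab(2) E] s nc by auto
      next
        case 2 then show False using chord_cycle[OF sg d _ e 2 ab(1) symG[OF sg E]] s nc by auto
      qed
    qed
  next
    assume "a = b + 1 \<or> b = a + 1"
    then show "(P ! a, P ! b) \<in> E"
      using epath_nth[OF e, of b] epath_nth[OF e, of a] ab symG[OF sg] by auto
  qed
  show ?thesis unfolding iso_to_path_def
  proof (intro exI conjI ballI)
    show "bij_betw f V {0..<card V}" by (rule bf)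
    fix u v assume uv: "u \<in> V" "v \<in> V"
    then obtain a b where "a < length P" "b < length P" "u = P ! a" "v = P ! b"
      using s by (metis in_set_conv_nth)
    then show "(u, v) \<in> E \<longleftrightarrow> (f u = f v + 1 \<or> f v = f u + 1)" using key fP by simp
  qed
qed

lemma epath_snoc: "epath E (xs @ [y]) \<longleftrightarrow> epath E xs \<and> (xs \<noteq> [] \<longrightarrow> (last xs, y) \<in> E)"
proof (induction xs)
  case Nil then show ?case by simp
next
  case (Cons a xs) then show ?case by (cases xs) auto
qed

lemma distinct_map_nth:
  "distinct P \<Longrightarrow> \<forall>t\<in>set ts. t < length P \<Longrightarrow> distinct ts \<Longrightarrow> distinct (map ((!) P) ts)"
  by (induction ts) (auto simp: nth_eq_iff_index_eq in_set_conv_nth)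

theorem theorem7:
  fixes V :: "'a set" and E :: "('a \<times> 'a) set" and k :: nat
  assumes "is_tree V E"
    and "card V > 10"
    and "\<not> iso_to_path V E"
    and "2 \<le> k" and "k \<le> card V - 2"
  shows "\<not> kuratowski_planar (with_proj (token_graph V E k))"
proof -
  have sg: "simple_graph V E" and Vne: "V \<noteq> {}" and con: "connected_graph V E" and nc: "\<not> has_cycle V E"
    using assms(1) unfolding is_tree_def by auto
  have finV: "finite V" using sg by (simp add: simple_graph_def)
  have n11: "11 \<le> card V" using assms(2) by simp
  note k1 = assms(4) and k2 = assms(5)
  define S where "S = {xs. distinct xs \<and> set xs \<subseteq> V \<and> epath E xs}"
  obtain v where v: "v \<in> V" using Vne by auto
  have vS: "[v] \<in> S" using v unfolding S_def by simp
  have bnd: "\<forall>y. y \<in> S \<longrightarrow> length y < card V + 1"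
  proof (intro allI impI)
    fix y assume "y \<in> S"
    then have d: "distinct y" and sy: "set y \<subseteq> V" unfolding S_def by auto
    have "card (set y) \<le> card V" using card_mono[OF finV sy] .
    then show "length y < card V + 1" using distinct_card[OF d] by simp
  qed
  obtain P where PS: "P \<in> S" and lpP: "\<forall>Q. Q \<in> S \<longrightarrow> length Q \<le> length P"
    using ex_has_greatest_nat[of "\<lambda>xs. xs \<in> S", OF vS bnd] by blast
  have dP: "distinct P" and sP: "set P \<subseteq> V" and eP: "epath E P" using PS unfolding S_def by auto
  have lp: "\<forall>Q. distinct Q \<and> set Q \<subseteq> V \<and> epath E Q \<longrightarrow> length Q \<le> length P"
    using lpP unfolding S_def by auto
  have Pne: "P \<noteq> []" using lpP vS by fastforce
  have "set P \<noteq> V" using ham_iso[OF sg nc dP _ eP] assms(3) by blast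
  then have cP: "card (set P) < card V" using sP finV by (meson psubsetI psubset_card_mono)
  obtain z x where z: "z \<in> set P" and xV: "x \<in> V" and xn: "x \<notin> set P" and zx: "(z,x) \<in> E"
    using grow[OF sg con sP Pne cP] by blast
  obtain i where i: "i < length P" "P ! i = z" using z by (auto simp: in_set_conv_nth)
  have ex: "(P ! i, x) \<in> E" using i zx by simp
  have adj: "(P ! j, P ! Suc j) \<in> E" "(P ! Suc j, P ! j) \<in> E" if "Suc j < length P" for j
    using epath_nth[OF eP that] symG[OF sg epath_nth[OF eP that]] by auto
  have inP: "P ! j \<in> V" "P ! j \<noteq> x" if "j < length P" for j using that sP xn nth_mem by auto
  have i0: "0 < i"
  proof (rule ccontr)
    assume "\<not> 0 < i"
    then have "i = 0" by simp
    then have "(x, P ! 0) \<in> E" using symG[OF sg ex] by simp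
    then have "epath E (x # P)" using eP Pne by (cases P) auto
    then have "distinct (x # P) \<and> set (x # P) \<subseteq> V \<and> epath E (x # P)" using dP xn sP xV by simp
    then have "length (x # P) \<le> length P" using lp by blast
    then show False by simp
  qed
  have iL: "i + 1 < length P"
  proof (rule ccontr)
    assume "\<not> i + 1 < length P"
    then have "i = length P - 1" using i by simp
    then have "last P = P ! i" using Pne by (simp add: last_conv_nth)
    then have "epath E (P @ [x])" using eP ex by (simp add: epath_snoc)
    then have "distinct (P @ [x]) \<and> set (P @ [x]) \<subseteq> V \<and> epath E (P @ [x])" using dP xn sP xV by simp
    then have "length (P @ [x]) \<le> length P" using lp by blast
    then show False by simp
  qed
  show ?thesis
  proof (cases "4 \<le> i")
    case True
    then have "i = Suc (Suc (Suc (Suc (i - 4))))" by simp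
    then obtain j where j: "i = Suc (Suc (Suc (Suc j)))" by blast
    define q0 q1 q2 q3 q4 q5 where "q0 = P!j" "q1 = P!(Suc j)" "q2 = P!(Suc (Suc j))" "q3 = P!(Suc (Suc (Suc j)))"
      "q4 = P!(Suc (Suc (Suc (Suc j))))" "q5 = P!(Suc (Suc (Suc (Suc (Suc j)))))"
    have l5: "Suc (Suc (Suc (Suc (Suc j)))) < length P" using iL j by simp
    have dq: "distinct [q4,q5,q3,q2,q1,q0]" unfolding q0_q1_q2_q3_q4_q5_def
      using distinct_map_nth[OF dP, of "[Suc (Suc (Suc (Suc j))),Suc (Suc (Suc (Suc (Suc j)))),Suc (Suc (Suc j)),Suc (Suc j),Suc j,j]"] l5 by simp
    have qP: "set [q4,q5,q3,q2,q1,q0] \<subseteq> set P" unfolding q0_q1_q2_q3_q4_q5_def using l5 by simp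
    have e: "(q4,q5) \<in> E" "(q4,q3) \<in> E" "(q3,q2) \<in> E" "(q2,q1) \<in> E" "(q1,q0) \<in> E"
      unfolding q0_q1_q2_q3_q4_q5_def
      by (rule adj; use l5 in linarith)+
    have ex': "(q4, x) \<in> E" using ex j unfolding q0_q1_q2_q3_q4_q5_def by simp
    show ?thesis
      by (rule shape_W6[OF sg n11 k1 k2, where c=q4 and a=x and b=q5 and da=q3 and db=q2 and dc=q1 and dd=q0])
         (use dq qP sP xn xV e ex' in auto)
  next
    case False
    note ibd0 = False
    show ?thesis
    proof (cases "i + 5 \<le> length P")
      case True
      have "i = Suc (i - 1)" using i0 by simp
      then obtain j where j: "i = Suc j" by blast
      define q0 q1 q2 q3 q4 q5 where "q0 = P!j" "q1 = P!(Suc j)" "q2 = P!(Suc (Suc j))" "q3 = P!(Suc (Suc (Suc j)))"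
        "q4 = P!(Suc (Suc (Suc (Suc j))))" "q5 = P!(Suc (Suc (Suc (Suc (Suc j)))))"
      have l5: "Suc (Suc (Suc (Suc (Suc j)))) < length P" using True j by simp
      have dq: "distinct [q1,q0,q2,q3,q4,q5]" unfolding q0_q1_q2_q3_q4_q5_def
        using distinct_map_nth[OF dP, of "[Suc j,j,Suc (Suc j),Suc (Suc (Suc j)),Suc (Suc (Suc (Suc j))),Suc (Suc (Suc (Suc (Suc j))))]"] l5 by simp
      have qP: "set [q1,q0,q2,q3,q4,q5] \<subseteq> set P" unfolding q0_q1_q2_q3_q4_q5_def using l5 by simp
      have e: "(q1,q0) \<in> E" "(q1,q2) \<in> E" "(q2,q3) \<in> E" "(q3,q4) \<in> E" "(q4,q5) \<in> E"
        unfolding q0_q1_q2_q3_q4_q5_def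
        by (rule adj; use l5 in linarith)+
      have ex': "(q1, x) \<in> E" using ex j unfolding q0_q1_q2_q3_q4_q5_def by simp
      show ?thesis
        by (rule shape_W6[OF sg n11 k1 k2, where c=q1 and a=x and b=q0 and da=q2 and db=q3 and dc=q4 and dd=q5])
           (use dq qP sP xn xV e ex' in auto)
    next
      case False
      then have ibd: "length P \<le> i + 4" "i \<le> 3" using ibd0 by auto
      then have lenP: "length P \<le> 7" by simp
        have "length P = 1 \<or> length P = 2 \<or> length P = 3 \<or> length P = 4 \<or> length P = 5 \<or> length P = 6 \<or> length P = 7" using lenP i by linarith
        moreover { assume ln: "length P = 1"
          obtain wa where Pe: "P = [wa]" using ln by (auto simp: length_Suc_conv numeral_eq_Suc)
          have "i = 0" using i0 iL ibd ln by linarith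
          moreover { assume ii: "i = 0"
            have ?thesis by (rule caseB_1_0[OF sg con n11 k1 k2, where x=x and va=wa]) (use lp dP sP eP xV xn ex Pe ii in auto)
          }
          ultimately have ?thesis by blast
        }
        moreover { assume ln: "length P = 2"
          obtain wa wb where Pe: "P = [wa,wb]" using ln by (auto simp: length_Suc_conv numeral_eq_Suc)
          have "i = 0 \<or> i = 1" using i0 iL ibd ln by linarith
          moreover { assume ii: "i = 0"
            have ?thesis by (rule caseB_2_0[OF sg con n11 k1 k2, where x=x and va=wa and vb=wb]) (use lp dP sP eP xV xn ex Pe ii in auto)
          }
          moreover { assume ii: "i = 1"
            have ?thesis by (rule caseB_2_1[OF sg con n11 k1 k2, where x=x and va=wa and vb=wb]) (use lp dP sP eP xV xn ex Pe ii in auto)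
          }
          ultimately have ?thesis by blast
        }
        moreover { assume ln: "length P = 3"
          obtain wa wb wc where Pe: "P = [wa,wb,wc]" using ln by (auto simp: length_Suc_conv numeral_eq_Suc)
          have "i = 0 \<or> i = 1 \<or> i = 2" using i0 iL ibd ln by linarith
          moreover { assume ii: "i = 0"
            have ?thesis by (rule caseB_3_0[OF sg con n11 k1 k2, where x=x and va=wa and vb=wb and vc=wc]) (use lp dP sP eP xV xn ex Pe ii in auto)
          }
          moreover { assume ii: "i = 1"
            have ?thesis by (rule caseB_3_1[OF sg con n11 k1 k2, where x=x and va=wa and vb=wb and vc=wc]) (use lp dP sP eP xV xn ex Pe ii in auto)
          }
          moreover { assume ii: "i = 2"
            have ?thesis by (rule caseB_3_2[OF sg con n11 k1 k2, where x=x and va=wa and vb=wb and vc=wc]) (use lp dP sP eP xV xn ex Pe ii in auto)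
          }
          ultimately have ?thesis by blast
        }
        moreover { assume ln: "length P = 4"
          obtain wa wb wc wd where Pe: "P = [wa,wb,wc,wd]" using ln by (auto simp: length_Suc_conv numeral_eq_Suc)
          have "i = 0 \<or> i = 1 \<or> i = 2 \<or> i = 3" using i0 iL ibd ln by linarith
          moreover { assume ii: "i = 0"
            have ?thesis by (rule caseB_4_0[OF sg con n11 k1 k2, where x=x and va=wa and vb=wb and vc=wc and vd=wd]) (use lp dP sP eP xV xn ex Pe ii in auto)
          }
          moreover { assume ii: "i = 1"
            have ?thesis by (rule caseB_4_1[OF sg con n11 k1 k2, where x=x and va=wa and vb=wb and vc=wc and vd=wd]) (use lp dP sP eP xV xn ex Pe ii in auto)
          }
          moreover { assume ii: "i = 2"
            have ?thesis by (rule caseB_4_2[OF sg con n11 k1 k2, where x=x and va=wa and vb=wb and vc=wc and vd=wd]) (use lp dP sP eP xV xn ex Pe ii in auto)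
          }
          moreover { assume ii: "i = 3"
            have ?thesis by (rule caseB_4_3[OF sg con n11 k1 k2, where x=x and va=wa and vb=wb and vc=wc and vd=wd]) (use lp dP sP eP xV xn ex Pe ii in auto)
          }
          ultimately have ?thesis by blast
        }
        moreover { assume ln: "length P = 5"
          obtain wa wb wc wd we where Pe: "P = [wa,wb,wc,wd,we]" using ln by (auto simp: length_Suc_conv numeral_eq_Suc)
          have "i = 1 \<or> i = 2 \<or> i = 3" using i0 iL ibd ln by linarith
          moreover { assume ii: "i = 1"
            have ?thesis by (rule caseB_5_1[OF sg con n11 k1 k2, where x=x and va=wa and vb=wb and vc=wc and vd=wd and ve=we]) (use lp dP sP eP xV xn ex Pe ii in auto)
          }
          moreover { assume ii: "i = 2"
            have ?thesis by (rule caseB_5_2[OF sg con n11 k1 k2, where x=x and va=wa and vb=wb and vc=wc and vd=wd and ve=we]) (use lp dP sP eP xV xn ex Pe ii in auto)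
          }
          moreover { assume ii: "i = 3"
            have ?thesis by (rule caseB_5_3[OF sg con n11 k1 k2, where x=x and va=wa and vb=wb and vc=wc and vd=wd and ve=we]) (use lp dP sP eP xV xn ex Pe ii in auto)
          }
          ultimately have ?thesis by blast
        }
        moreover { assume ln: "length P = 6"
          obtain wa wb wc wd we wf where Pe: "P = [wa,wb,wc,wd,we,wf]" using ln by (auto simp: length_Suc_conv numeral_eq_Suc)
          have "i = 2 \<or> i = 3" using i0 iL ibd ln by linarith
          moreover { assume ii: "i = 2"
            have ?thesis by (rule caseB_6_2[OF sg con n11 k1 k2, where x=x and va=wa and vb=wb and vc=wc and vd=wd and ve=we and vf=wf]) (use lp dP sP eP xV xn ex Pe ii in auto)
          }
          moreover { assume ii: "i = 3"
            have ?thesis by (rule caseB_6_3[OF sg con n11 k1 k2, where x=x and va=wa and vb=wb and vc=wc and vd=wd and ve=we and vf=wf]) (use lp dP sP eP xV xn ex Pe ii in auto)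
          }
          ultimately have ?thesis by blast
        }
        moreover { assume ln: "length P = 7"
          obtain wa wb wc wd we wf wg where Pe: "P = [wa,wb,wc,wd,we,wf,wg]" using ln by (auto simp: length_Suc_conv numeral_eq_Suc)
          have "i = 3" using i0 iL ibd ln by linarith
          moreover { assume ii: "i = 3"
            have ?thesis by (rule caseB_7_3[OF sg con n11 k1 k2, where x=x and va=wa and vb=wb and vc=wc and vd=wd and ve=we and vf=wf and vg=wg]) (use lp dP sP eP xV xn ex Pe ii in auto)
          }
          ultimately have ?thesis by blast
        }
        ultimately show ?thesis by blast
    qed
  qed
qed

end
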